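(* Let $f,a_1,p,d_2\in\mathbb{C}$ with $\mathrm{Re}(f-2a_1-2d_2-2)>0$, such that the series below is well defined (no lower parameter is a nonpositive integer), $a_1\ne0$, and the quantities below are defined and $k$ is not a nonpositive integer. Put $$h=\frac{p(f-p-1)}{a_1},\qquad k=\frac{h(1+a_1-f/2)(1+d_2+a_1-f)}{d_2f/2-h(1+d_2+a_1-f/2)}.$$ Then $$ {}_{6}F_{5}\left[\begin{matrix} f-1,\ \frac{f+1}{2},\ a_1,\ f-p,\ p+1,\ d_2\\ \frac{f-1}{2},\ f-a_1,\ p,\ f-p-1,\ f-d_2\end{matrix};1\right]=\frac{\Gamma(f/2)\Gamma(f-d_2)\Gamma(f-a_1)\Gamma(f/2-a_1-d_2-1)}{\Gamma(f)\Gamma(f/2-d_2)\Gamma(f/2-a_1-1)\Gamma(f-a_1-d_2-1)}\cdot\frac{\Gamma(k)}{\Gamma(k+1)}.$$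
   Context: $(x)_n$ denotes the Pochhammer symbol: $(x)_0=1$, $(x)_n=x(x+1)\cdots(x+n-1)$ for $n\ge1$. The generalized hypergeometric function is $${}_{r+1}F_{r}\left[\begin{matrix} a_1,\dots,a_{r+1}\\ b_1,\dots,b_r\end{matrix};z\right]=\sum_{n=0}^{\infty}\frac{(a_1)_n\cdots(a_{r+1})_n}{(b_1)_n\cdots(b_r)_n\,n!}z^n ,$$ where no $b_i$ is a nonpositive integer. $\Gamma$ is Euler's gamma function. *)

theory Defs
  imports "HOL-Analysis.Analysis"
begin

definition hyp_term :: "complex list \<Rightarrow> complex list \<Rightarrow> complex \<Rightarrow> nat \<Rightarrow> complex" where
  "hyp_term as bs z n =
     (\<Prod>a\<leftarrow>as. pochhammer a n) / ((\<Prod>b\<leftarrow>bs. pochhammer b n) * fact n) * z ^ n"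

definition hypergeom :: "complex list \<Rightarrow> complex list \<Rightarrow> complex \<Rightarrow> complex" where
  "hypergeom as bs z = (\<Sum>n. hyp_term as bs z n)"

end

theory Submission
  imports Defs
begin


definition Pt :: "complex \<Rightarrow> complex \<Rightarrow> complex \<Rightarrow> complex \<Rightarrow> complex" where
 "Pt a b c x =
   ((-1) + 3*c - 2*c^2 + 3*b - 5*b*c + 2*b*c^2 - 2*b^2 + 2*b^2*c - 5*a + 8*a*c - 2*a*c^2 + 8*a*b - 4*a*b*c - 2*a*b*c^2 - 2*a*b^2 - 2*a*b^2*c - 9*a^2 + 7*a^2*c + 7*a^2*b + a^2*b*c - 7*a^3 + 2*a^3*c + 2*a^3*b - 2*a^4)
 + ((-3) + 4*c + 4*b + 2*b*c - 4*b*c^2 - 4*b^2*c - 13*a + 10*a*c + 10*a*b + 2*a*b*c - 17*a^2 + 6*a^2*c + 6*a^2*b - 7*a^3) * x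
 + ((-5) + 4*c + 4*b - 12*a + 4*a*c + 4*a*b - 7*a^2) * x^2
 + ((-2) - 2*a) * x^3"

lemma Pt_identity:
  "(a+x)*(b+x)*(c+x)*Pt a b c (x+1) - x*Pt a b c x*(2+a-b+x)*(2+a-c+x)
   = (1+a-2*b-2*c)*(a+1)*(a+2*x)*(1+a-b+x)*(2+a-b+x)*(1+a-c+x)*(2+a-c+x)
     - (1+a-b-c)*(2+a-b-c)*(1+a-2*b)*(1+a-2*c)*(a+2+2*x)*(a+x)*(a+x+1)"
  unfolding Pt_def by algebra

definition vt :: "complex \<Rightarrow> complex \<Rightarrow> complex \<Rightarrow> nat \<Rightarrow> complex" where
  "vt a b c n = (a + 2 * of_nat n) / a * (pochhammer a n * pochhammer b n * pochhammer c n)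
      / (pochhammer (1+a-b) n * pochhammer (1+a-c) n * fact n)"

definition good :: "complex \<Rightarrow> complex \<Rightarrow> complex \<Rightarrow> bool" where
  "good a b c \<longleftrightarrow> (\<forall>k::nat. a + of_nat k \<noteq> 0 \<and> 1 + a - b + of_nat k \<noteq> 0 \<and> 1 + a - c + of_nat k \<noteq> 0)"

lemma goodD:
  assumes "good a b c"
  shows "a + of_nat k \<noteq> 0" "1 + a - b + of_nat k \<noteq> 0" "1 + a - c + of_nat k \<noteq> 0"
    "a \<noteq> 0" "a + 1 \<noteq> 0" "a + 2 \<noteq> 0" "a + 2 * of_nat k \<noteq> 0" "a + of_nat k + 1 \<noteq> 0"
    "2 + a - b + of_nat k \<noteq> 0" "2 + a - c + of_nat k \<noteq> 0" "1 + a - b \<noteq> 0" "1 + a - c \<noteq> 0"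
    "2 + a - b \<noteq> 0" "2 + a - c \<noteq> 0"
proof -
  have H: "\<And>k::nat. a + of_nat k \<noteq> 0 \<and> 1 + a - b + of_nat k \<noteq> 0 \<and> 1 + a - c + of_nat k \<noteq> 0"
    using assms by (auto simp: good_def)
  show "a + of_nat k \<noteq> 0" "1 + a - b + of_nat k \<noteq> 0" "1 + a - c + of_nat k \<noteq> 0" using H by auto
  show "a \<noteq> 0" using H[of 0] by simp
  show "a + 1 \<noteq> 0" using H[of 1] by simp
  show "a + 2 \<noteq> 0" using H[of 2] by simp
  show "a + 2 * of_nat k \<noteq> 0" using H[of "2*k"] by simp
  show "a + of_nat k + 1 \<noteq> 0" using H[of "k+1"] by (simp add: algebra_simps)
  show "2 + a - b + of_nat k \<noteq> 0" using H[of "k+1"] by (simp add: algebra_simps)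
  show "2 + a - c + of_nat k \<noteq> 0" using H[of "k+1"] by (simp add: algebra_simps)
  show "1 + a - b \<noteq> 0" "1 + a - c \<noteq> 0" using H[of 0] by simp_all
  show "2 + a - b \<noteq> 0" "2 + a - c \<noteq> 0" using H[of 1] by (simp_all add: algebra_simps)
qed

lemma poch_nz: assumes "\<And>k::nat. x + of_nat k \<noteq> (0::complex)" shows "pochhammer x n \<noteq> 0"
proof
  assume "pochhammer x n = 0"
  then obtain k where "x = - of_nat k" by (auto simp: pochhammer_eq_0_iff)
  with assms[of k] show False by simp
qed

lemma good_poch:
  assumes "good a b c"
  shows "pochhammer a n \<noteq> 0" "pochhammer (1 + a - b) n \<noteq> 0" "pochhammer (1 + a - c) n \<noteq> 0"
  using assms by (auto intro!: poch_nz dest: goodD)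

lemma frac_Suc:
  fixes a A0 A1 P Qb Qc Rb Rc F x y z u v w :: complex
  assumes "a \<noteq> 0" "A0 \<noteq> 0" "Rb \<noteq> 0" "u \<noteq> 0" "Rc \<noteq> 0" "v \<noteq> 0" "F \<noteq> 0" "w \<noteq> 0"
  shows "A1 / a * (P * x * (Qb * y) * (Qc * z)) / (Rb * u * (Rc * v) * (w * F))
       = A0 / a * (P * Qb * Qc) / (Rb * Rc * F) * (A1 * x * y * z / (A0 * u * v * w))"
  using assms by (simp add: field_simps)

lemma vt_Suc:
  assumes g: "good a b c"
  shows "vt a b c (Suc n) = vt a b c n * ((a + 2 * of_nat n + 2) * (a + of_nat n) * (b + of_nat n) * (c + of_nat n)
          / ((a + 2 * of_nat n) * (1 + a - b + of_nat n) * (1 + a - c + of_nat n) * (of_nat n + 1)))"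
proof -
  have w: "(of_nat n + 1 :: complex) \<noteq> 0" by (metis of_nat_Suc of_nat_eq_0_iff nat.distinct(1) add.commute)
  have "vt a b c (Suc n) = (a + 2 * of_nat n + 2) / a * (pochhammer a n * (a + of_nat n) * (pochhammer b n * (b + of_nat n)) * (pochhammer c n * (c + of_nat n)))
     / (pochhammer (1 + a - b) n * (1 + a - b + of_nat n) * (pochhammer (1 + a - c) n * (1 + a - c + of_nat n)) * ((of_nat n + 1) * fact n))"
    unfolding vt_def pochhammer_Suc fact_Suc by (simp add: algebra_simps)
  also have "\<dots> = vt a b c n * ((a + 2 * of_nat n + 2) * (a + of_nat n) * (b + of_nat n) * (c + of_nat n)
          / ((a + 2 * of_nat n) * (1 + a - b + of_nat n) * (1 + a - c + of_nat n) * (of_nat n + 1)))"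
    unfolding vt_def
    by (rule frac_Suc) (use goodD[OF g] good_poch[OF g] w in auto)
  finally show ?thesis .
qed

lemma poch_plus2: "pochhammer (x + 2) n * (x * (x + 1)) = pochhammer (x::complex) n * ((x + of_nat n) * (x + of_nat n + 1))"
proof -
  have "pochhammer x (Suc (Suc n)) = x * ((x + 1) * pochhammer (x + 2) n)"
    by (simp add: pochhammer_rec add.assoc one_add_one)
  moreover have "pochhammer x (Suc (Suc n)) = (x + of_nat n + 1) * ((x + of_nat n) * pochhammer x n)"
    by (simp add: pochhammer_rec' add.assoc)
  ultimately show ?thesis by (simp add: algebra_simps)
qed

lemma frac_s:
  fixes a a1 a2 A0 A' P Qb Qc Rb Rc F Xa Xb B1 B2 C1 C2 U1 U2 V1 V2 :: complex
  assumes "a \<noteq> 0" "a1 \<noteq> 0" "a2 \<noteq> 0" "A0 \<noteq> 0" "Rb \<noteq> 0" "Rc \<noteq> 0" "F \<noteq> 0"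
    "B1 \<noteq> 0" "B2 \<noteq> 0" "C1 \<noteq> 0" "C2 \<noteq> 0" "U1 \<noteq> 0" "U2 \<noteq> 0" "V1 \<noteq> 0" "V2 \<noteq> 0"
  shows "A' / a2 * (P * (Xa * Xb) / (a * a1) * Qb * Qc) / (Rb * (U1 * U2) / (B1 * B2) * (Rc * (V1 * V2) / (C1 * C2)) * F)
    = A0 / a * (P * Qb * Qc) / (Rb * Rc * F) * (A' * Xa * Xb * B1 * B2 * C1 * C2 / (a2 * A0 * a1 * U1 * U2 * V1 * V2))"
  using assms by (simp add: field_simps)

lemma vt_shift2:
  assumes g: "good a b c"
  shows "vt (a + 2) b c n = vt a b c n * ((a + 2 + 2 * of_nat n) * (a + of_nat n) * (a + of_nat n + 1) * (1 + a - b) * (2 + a - b) * (1 + a - c) * (2 + a - c)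
     / ((a + 2) * (a + 2 * of_nat n) * (a + 1) * (1 + a - b + of_nat n) * (2 + a - b + of_nat n) * (1 + a - c + of_nat n) * (2 + a - c + of_nat n)))"
proof -
  have e1: "pochhammer (a + 2) n = pochhammer a n * ((a + of_nat n) * (a + of_nat n + 1)) / (a * (a + 1))"
  proof -
    have "a * (a + 1) \<noteq> 0" using goodD[OF g] by simp
    thus ?thesis using poch_plus2[of a n] by (simp add: eq_divide_eq)
  qed
  have "pochhammer ((1 + a - b) + 2) n = pochhammer (1 + a - b) n * ((1 + a - b + of_nat n) * (1 + a - b + of_nat n + 1)) / ((1 + a - b) * (1 + a - b + 1))"
  proof -
    have "1 + a - b + 1 = 2 + a - b" by simp
    hence "(1 + a - b) * (1 + a - b + 1) \<noteq> 0" using goodD(11)[OF g] goodD(13)[OF g] by (metis mult_eq_0_iff)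
    thus ?thesis using poch_plus2[of "1 + a - b" n] by (simp add: eq_divide_eq)
  qed
  hence e2: "pochhammer (1 + (a + 2) - b) n = pochhammer (1 + a - b) n * ((1 + a - b + of_nat n) * (2 + a - b + of_nat n)) / ((1 + a - b) * (2 + a - b))"
    by (simp add: algebra_simps)
  have "pochhammer ((1 + a - c) + 2) n = pochhammer (1 + a - c) n * ((1 + a - c + of_nat n) * (1 + a - c + of_nat n + 1)) / ((1 + a - c) * (1 + a - c + 1))"
  proof -
    have "1 + a - c + 1 = 2 + a - c" by simp
    hence "(1 + a - c) * (1 + a - c + 1) \<noteq> 0" using goodD(12)[OF g] goodD(14)[OF g] by (metis mult_eq_0_iff)
    thus ?thesis using poch_plus2[of "1 + a - c" n] by (simp add: eq_divide_eq)
  qed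
  hence e3: "pochhammer (1 + (a + 2) - c) n = pochhammer (1 + a - c) n * ((1 + a - c + of_nat n) * (2 + a - c + of_nat n)) / ((1 + a - c) * (2 + a - c))"
    by (simp add: algebra_simps)
  show ?thesis
    unfolding vt_def e1 e2 e3
    by (rule frac_s) (use goodD[OF g] good_poch[OF g] in auto)
qed



definition rho :: "complex \<Rightarrow> complex \<Rightarrow> complex \<Rightarrow> complex" where
  "rho a b c = (a + 2) * ((1+a-b-c)*(2+a-b-c)*(1+a-2*b)*(1+a-2*c))
     / ((1 + a - b) * (2 + a - b) * (1 + a - c) * (2 + a - c) * (1 + a - 2*b - 2*c))"

lemma rho_C:
  assumes "1 + a - b \<noteq> 0" "1 + a - c \<noteq> 0" "2 + a - b \<noteq> 0" "2 + a - c \<noteq> 0"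
  shows "rho a b c * ((1 + a - b) * (2 + a - b) * (1 + a - c) * (2 + a - c))
     = (a + 2) * ((1+a-b-c)*(2+a-b-c)*(1+a-2*b)*(1+a-2*c)) / (1 + a - 2*b - 2*c)"
  unfolding rho_def using assms by simp

lemma frac_r:
  fixes r C A a1 a2 E D K :: complex
  assumes "r * C = a2 * K / D" "a1 \<noteq> 0" "a2 \<noteq> 0" "E \<noteq> 0" "D \<noteq> 0"
  shows "1 - r * (A * C / (a2 * E * a1)) = (D * a1 * E - K * A) / (D * a1 * E)"
proof -
  have "r * (A * C / (a2 * E * a1)) = (r * C) * A / (a2 * E * a1)" by simp
  also have "\<dots> = K * A / (D * a1 * E)" using assms by (simp add: field_simps)
  finally show ?thesis using assms by (simp add: field_simps)
qed


lemma frac_l: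
  fixes Y Xa Xb Xc A0 U1 V1 W p1 D a1 U2 V2 x p0 :: complex
  assumes "Y \<noteq> 0" "A0 \<noteq> 0" "U1 \<noteq> 0" "V1 \<noteq> 0" "W \<noteq> 0" "D \<noteq> 0" "a1 \<noteq> 0" "U2 \<noteq> 0" "V2 \<noteq> 0"
  shows "(Y * Xa * Xb * Xc / (A0 * U1 * V1 * W)) * (W * p1) / (D * a1 * Y * U2 * V2)
      - x * p0 / (D * a1 * A0 * U1 * V1)
    = (Xa * Xb * Xc * p1 - x * p0 * U2 * V2) / (D * a1 * (A0 * U1 * U2 * V1 * V2))"
  using assms by (simp add: field_simps)

lemma rat_right:
  fixes a b c x :: complex
  assumes "1 + a - 2*b - 2*c \<noteq> 0" "a + 1 \<noteq> 0" "a + 2 \<noteq> 0" "a + 2*x \<noteq> 0"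
    "1 + a - b + x \<noteq> 0" "1 + a - c + x \<noteq> 0" "2 + a - b + x \<noteq> 0" "2 + a - c + x \<noteq> 0"
    "1 + a - b \<noteq> 0" "1 + a - c \<noteq> 0" "2 + a - b \<noteq> 0" "2 + a - c \<noteq> 0"
  shows "1 - rho a b c * ((a + 2 + 2 * x) * (a + x) * (a + x + 1) * (1 + a - b) * (2 + a - b) * (1 + a - c) * (2 + a - c)
     / ((a + 2) * (a + 2 * x) * (a + 1) * (1 + a - b + x) * (2 + a - b + x) * (1 + a - c + x) * (2 + a - c + x)))
   = ((1 + a - 2*b - 2*c) * (a + 1) * ((a + 2 * x) * (1 + a - b + x) * (2 + a - b + x) * (1 + a - c + x) * (2 + a - c + x))
       - ((1+a-b-c)*(2+a-b-c)*(1+a-2*b)*(1+a-2*c)) * ((a+2+2*x)*(a+x)*(a+x+1))) /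
      ((1 + a - 2*b - 2*c) * (a + 1) * ((a + 2 * x) * (1 + a - b + x) * (2 + a - b + x) * (1 + a - c + x) * (2 + a - c + x)))"
proof -
  have e: "(a + 2 + 2 * x) * (a + x) * (a + x + 1) * (1 + a - b) * (2 + a - b) * (1 + a - c) * (2 + a - c)
     / ((a + 2) * (a + 2 * x) * (a + 1) * (1 + a - b + x) * (2 + a - b + x) * (1 + a - c + x) * (2 + a - c + x))
    = ((a+2+2*x)*(a+x)*(a+x+1)) * ((1 + a - b) * (2 + a - b) * (1 + a - c) * (2 + a - c))
      / ((a + 2) * ((a + 2 * x) * (1 + a - b + x) * (2 + a - b + x) * (1 + a - c + x) * (2 + a - c + x)) * (a + 1))"
    by (simp only: ac_simps)
  have E: "(a + 2 * x) * (1 + a - b + x) * (2 + a - b + x) * (1 + a - c + x) * (2 + a - c + x) \<noteq> 0"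
    using assms by (simp only: mult_eq_0_iff de_Morgan_disj) simp
  show ?thesis unfolding e
    by (rule frac_r[OF rho_C]) (use assms E in auto)
qed


definition GG :: "complex \<Rightarrow> complex \<Rightarrow> complex \<Rightarrow> nat \<Rightarrow> complex" where
  "GG a b c n = vt a b c n * (of_nat n * Pt a b c (of_nat n))
     / ((1 + a - 2*b - 2*c) * (a + 1) * (a + 2 * of_nat n) * (1 + a - b + of_nat n) * (1 + a - c + of_nat n))"

lemma GG_diff:
  assumes g: "good a b c" and D: "1 + a - 2*b - 2*c \<noteq> 0"
  shows "GG a b c (Suc n) - GG a b c n = vt a b c n - rho a b c * vt (a + 2) b c n"
proof -
  define x :: complex where "x = of_nat n"
  have x1: "x + 1 \<noteq> 0" unfolding x_def by (metis of_nat_Suc of_nat_eq_0_iff nat.distinct(1) add.commute)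
  note gd = goodD(1,2,3,7,8,9,10)[OF g, of n, folded x_def] goodD(4,5,6,11,12,13,14)[OF g]
  have Y: "a + 2 * x + 2 \<noteq> 0" using goodD(7)[OF g, of "Suc n"] by (simp add: x_def algebra_simps)
  have "GG a b c (Suc n) = vt a b c (Suc n) * ((x + 1) * Pt a b c (x + 1))
     / ((1 + a - 2*b - 2*c) * (a + 1) * (a + 2 * x + 2) * (2 + a - b + x) * (2 + a - c + x))"
    unfolding GG_def x_def by (simp add: algebra_simps)
  also have "\<dots> = vt a b c n * (((a + 2 * x + 2) * (a + x) * (b + x) * (c + x)
          / ((a + 2 * x) * (1 + a - b + x) * (1 + a - c + x) * (x + 1)))
       * ((x + 1) * Pt a b c (x + 1))
     / ((1 + a - 2*b - 2*c) * (a + 1) * (a + 2 * x + 2) * (2 + a - b + x) * (2 + a - c + x)))"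
    unfolding vt_Suc[OF g] x_def by simp
  finally have G1: "GG a b c (Suc n) = \<dots>" .
  have G0: "GG a b c n = vt a b c n * (x * Pt a b c x / ((1 + a - 2*b - 2*c) * (a + 1) * (a + 2 * x) * (1 + a - b + x) * (1 + a - c + x)))"
    unfolding GG_def x_def by simp
  have "GG a b c (Suc n) - GG a b c n = vt a b c n * (
      ((a + 2 * x + 2) * (a + x) * (b + x) * (c + x) / ((a + 2 * x) * (1 + a - b + x) * (1 + a - c + x) * (x + 1)))
       * ((x + 1) * Pt a b c (x + 1))
     / ((1 + a - 2*b - 2*c) * (a + 1) * (a + 2 * x + 2) * (2 + a - b + x) * (2 + a - c + x))
     - x * Pt a b c x / ((1 + a - 2*b - 2*c) * (a + 1) * (a + 2 * x) * (1 + a - b + x) * (1 + a - c + x)))"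
    unfolding G1 G0 by (simp add: right_diff_distrib)
  also have "\<dots> = vt a b c n * (((a+x)*(b+x)*(c+x)*Pt a b c (x+1) - x*Pt a b c x*(2+a-b+x)*(2+a-c+x)) /
      ((1 + a - 2*b - 2*c) * (a + 1) * ((a + 2 * x) * (1 + a - b + x) * (2 + a - b + x) * (1 + a - c + x) * (2 + a - c + x))))"
    by (subst frac_l) (use Y gd x1 D in auto)
  also have "\<dots> = vt a b c n * (((1 + a - 2*b - 2*c) * (a + 1) * ((a + 2 * x) * (1 + a - b + x) * (2 + a - b + x) * (1 + a - c + x) * (2 + a - c + x))
       - ((1+a-b-c)*(2+a-b-c)*(1+a-2*b)*(1+a-2*c)) * ((a+2+2*x)*(a+x)*(a+x+1))) /
      ((1 + a - 2*b - 2*c) * (a + 1) * ((a + 2 * x) * (1 + a - b + x) * (2 + a - b + x) * (1 + a - c + x) * (2 + a - c + x))))"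
    unfolding Pt_identity by (simp only: ac_simps)
  also have "\<dots> = vt a b c n * (1 - rho a b c * ((a + 2 + 2 * x) * (a + x) * (a + x + 1) * (1 + a - b) * (2 + a - b) * (1 + a - c) * (2 + a - c)
     / ((a + 2) * (a + 2 * x) * (a + 1) * (1 + a - b + x) * (2 + a - b + x) * (1 + a - c + x) * (2 + a - c + x))))"
    by (subst rat_right) (use gd D in auto)
  also have "\<dots> = vt a b c n - rho a b c * vt (a + 2) b c n"
    unfolding vt_shift2[OF g] x_def by (simp add: algebra_simps)
  finally show ?thesis .
qed




lemma ofnat1_nz [simp]: "of_nat m + (1::complex) \<noteq> 0" "1 + of_nat m \<noteq> (0::complex)"
  by (metis of_nat_Suc of_nat_eq_0_iff nat.distinct(1) add.commute)+

lemma norm_nat_lemmas [simp]: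
  "norm (2 * of_nat m + 2 :: complex) = 2 * real m + 2"
  "norm (1 + of_nat m :: complex) = real m + 1"
  "norm (of_nat m + 1 :: complex) = real m + 1"
proof -
  have "(2 * of_nat m + 2 :: complex) = of_nat (2*m+2)" by simp
  moreover have "norm (of_nat (2*m+2) :: complex) = real (2*m+2)" by (rule norm_of_nat)
  ultimately show "norm (2 * of_nat m + 2 :: complex) = 2 * real m + 2" by (simp add: add.commute)
  have "(1 + of_nat m :: complex) = of_nat (Suc m)" by simp
  moreover have "norm (of_nat (Suc m) :: complex) = real (Suc m)" by (rule norm_of_nat)
  ultimately show "norm (1 + of_nat m :: complex) = real m + 1" by simp
  thus "norm (of_nat m + 1 :: complex) = real m + 1" by (simp add: add.commute)
qed

lemma poch_rGS: "pochhammer z (Suc m) = rGamma_series z m * (fact m * exp (z * of_real (ln (of_nat m))))"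
  unfolding rGamma_series_def by simp

lemma frac_g:
  fixes A a w ra rb rc rab rac F ea eb ec eab eac :: complex
  assumes "a \<noteq> 0" "w \<noteq> 0" "F \<noteq> 0" "eab \<noteq> 0" "eac \<noteq> 0"
  shows "A / a * (ra * (F * ea) * (rb * (F * eb)) * (rc * (F * ec))) / (rab * (F * eab) * (rac * (F * eac)) * (w * F))
     = A / (a * w) * (ra * rb * rc / (rab * rac)) * (ea * eb * ec / (eab * eac))"
  using assms by (simp add: field_simps)

lemma vt_rGS:
  assumes g: "good a b c"
  shows "vt a b c (Suc m) = (a + 2 * of_nat m + 2) / (a * (of_nat m + 1))
     * (rGamma_series a m * rGamma_series b m * rGamma_series c m / (rGamma_series (1 + a - b) m * rGamma_series (1 + a - c) m))
     * exp ((2*b + 2*c - a - 2) * of_real (ln (of_nat m)))"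
proof -
  define L :: complex where "L = of_real (ln (of_nat m))"
  have "vt a b c (Suc m) = (a + 2 * of_nat m + 2) / a *
     (rGamma_series a m * (fact m * exp (a * L)) * (rGamma_series b m * (fact m * exp (b * L))) * (rGamma_series c m * (fact m * exp (c * L))))
     / (rGamma_series (1 + a - b) m * (fact m * exp ((1 + a - b) * L)) * (rGamma_series (1 + a - c) m * (fact m * exp ((1 + a - c) * L))) * ((of_nat m + 1) * fact m))"
    unfolding vt_def poch_rGS fact_Suc L_def by (simp add: algebra_simps)
  also have "\<dots> = (a + 2 * of_nat m + 2) / (a * (of_nat m + 1))
     * (rGamma_series a m * rGamma_series b m * rGamma_series c m / (rGamma_series (1 + a - b) m * rGamma_series (1 + a - c) m))
     * (exp (a * L) * exp (b * L) * exp (c * L) / (exp ((1 + a - b) * L) * exp ((1 + a - c) * L)))"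
    by (rule frac_g) (use goodD[OF g] in \<open>auto simp: add.commute\<close>)
  also have "exp (a * L) * exp (b * L) * exp (c * L) / (exp ((1 + a - b) * L) * exp ((1 + a - c) * L))
      = exp (a * L + b * L + c * L - ((1 + a - b) * L + (1 + a - c) * L))"
    by (simp add: exp_add exp_diff)
  also have "a * L + b * L + c * L - ((1 + a - b) * L + (1 + a - c) * L) = (2*b + 2*c - a - 2) * L"
    by (simp add: algebra_simps)
  finally show ?thesis unfolding L_def .
qed


lemma npi_iff: "(x::complex) \<notin> \<int>\<^sub>\<le>\<^sub>0 \<longleftrightarrow> (\<forall>k::nat. x + of_nat k \<noteq> 0)"
proof
  assume "x \<notin> \<int>\<^sub>\<le>\<^sub>0"
  show "\<forall>k::nat. x + of_nat k \<noteq> 0"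
  proof (intro allI notI)
    fix k :: nat assume "x + of_nat k = 0"
    hence "x = - of_nat k" by (simp add: eq_neg_iff_add_eq_0)
    with \<open>x \<notin> \<int>\<^sub>\<le>\<^sub>0\<close> show False by simp
  qed
next
  assume H: "\<forall>k::nat. x + of_nat k \<noteq> 0"
  show "x \<notin> \<int>\<^sub>\<le>\<^sub>0"
  proof
    assume "x \<in> \<int>\<^sub>\<le>\<^sub>0"
    then obtain n where "x = - of_nat n" by (rule nonpos_Ints_cases')
    with H show False by auto
  qed
qed

lemma good_npi:
  assumes "good a b c"
  shows "a \<notin> \<int>\<^sub>\<le>\<^sub>0" "1 + a - b \<notin> \<int>\<^sub>\<le>\<^sub>0" "1 + a - c \<notin> \<int>\<^sub>\<le>\<^sub>0"
  using assms unfolding npi_iff good_def by auto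

lemma vt_bound:
  assumes g: "good a b c"
  shows "\<exists>C. eventually (\<lambda>m. norm (vt a b c (Suc m)) \<le> C * real m powr Re (2*b + 2*c - a - 2)) sequentially"
proof -
  define Qs where "Qs = (\<lambda>m. rGamma_series a m * rGamma_series b m * rGamma_series c m / (rGamma_series (1 + a - b) m * rGamma_series (1 + a - c) m))"
  define Q where "Q = rGamma a * rGamma b * rGamma c / (rGamma (1 + a - b) * rGamma (1 + a - c))"
  have "Qs \<longlonglongrightarrow> Q" unfolding Qs_def Q_def
    by (intro tendsto_intros) (use good_npi[OF g] in \<open>auto simp: rGamma_eq_zero_iff\<close>)
  hence ev1: "eventually (\<lambda>m. dist (Qs m) Q < 1) sequentially"
    by (rule tendstoD) simp
  have a0: "a \<noteq> 0" using goodD[OF g] by simp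
  define C where "C = (1 + 2 / norm a) * (norm Q + 1)"
  have "eventually (\<lambda>m. norm (vt a b c (Suc m)) \<le> C * real m powr Re (2*b + 2*c - a - 2)) sequentially"
    using ev1 eventually_gt_at_top[of "0::nat"]
  proof eventually_elim
    case (elim m)
    have q: "norm (Qs m) \<le> norm Q + 1" using elim(1) norm_triangle_ineq2[of "Qs m" Q]
      by (simp add: dist_norm)
    have f1: "norm ((a + 2 * of_nat m + 2) / (a * (of_nat m + 1))) \<le> 1 + 2 / norm a"
    proof -
      have "norm (a + 2 * of_nat m + 2) \<le> norm a + 2 * (real m + 1)"
        using norm_triangle_ineq[of a "2 * of_nat m + 2"] by (simp add: add.assoc)
      moreover have "norm (a * (of_nat m + 1)) = norm a * (real m + 1)"
        by (simp add: norm_mult)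
      moreover have "norm a > 0" using a0 by simp
      ultimately have "norm ((a + 2 * of_nat m + 2) / (a * (of_nat m + 1))) \<le> (norm a + 2 * (real m + 1)) / (norm a * (real m + 1))"
        by (simp add: norm_divide divide_right_mono)
      also have "\<dots> = 1 / (real m + 1) + 2 / norm a" using \<open>norm a > 0\<close> by (simp add: field_simps)
      also have "\<dots> \<le> 1 + 2 / norm a" by (simp add: field_simps)
      finally show ?thesis .
    qed
    have f3: "norm (exp ((2*b + 2*c - a - 2) * of_real (ln (of_nat m)))) = real m powr Re (2*b + 2*c - a - 2)"
      using elim(2) by (simp add: powr_def)
    have "norm (vt a b c (Suc m)) = norm ((a + 2 * of_nat m + 2) / (a * (of_nat m + 1))) * norm (Qs m)
        * norm (exp ((2*b + 2*c - a - 2) * of_real (ln (of_nat m))))"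
      unfolding vt_rGS[OF g] Qs_def by (simp only: norm_mult)
    also have "\<dots> \<le> (1 + 2 / norm a) * (norm Q + 1) * real m powr Re (2*b + 2*c - a - 2)"
      unfolding f3 by (intro mult_mono f1 q) auto
    finally show ?case unfolding C_def .
  qed
  thus ?thesis by blast
qed

lemma vt_summable:
  assumes g: "good a b c" and re: "Re (1 + a - 2*b - 2*c) > 0"
  shows "summable (\<lambda>n. norm (vt a b c n))"
proof -
  obtain C where C: "eventually (\<lambda>m. norm (vt a b c (Suc m)) \<le> C * real m powr Re (2*b + 2*c - a - 2)) sequentially"
    using vt_bound[OF g] by blast
  have "summable (\<lambda>m. C * real m powr Re (2*b + 2*c - a - 2))"
    using re by (intro summable_mult) (simp add: summable_real_powr_iff)
  hence "summable (\<lambda>m. norm (vt a b c (Suc m)))"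
    by (rule summable_comparison_test_ev[rotated]) (use C in auto)
  thus ?thesis by (subst summable_Suc_iff[symmetric])
qed

lemma vt_n_lim:
  assumes g: "good a b c" and re: "Re (1 + a - 2*b - 2*c) > 0"
  shows "(\<lambda>n. of_nat n * vt a b c n) \<longlonglongrightarrow> 0"
proof -
  obtain C where C: "eventually (\<lambda>m. norm (vt a b c (Suc m)) \<le> C * real m powr Re (2*b + 2*c - a - 2)) sequentially"
    using vt_bound[OF g] by blast
  define s where "s = Re (2*b + 2*c - a - 2)"
  have s: "s + 1 < 0" using re unfolding s_def by simp
  have "(\<lambda>m. of_nat (Suc m) * vt a b c (Suc m)) \<longlonglongrightarrow> 0"
  proof (rule Lim_null_comparison)
    show "eventually (\<lambda>m. norm (of_nat (Suc m) * vt a b c (Suc m)) \<le> 2 * \<bar>C\<bar> * real m powr (s + 1)) sequentially"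
      using C eventually_gt_at_top[of "0::nat"]
    proof eventually_elim
      case (elim m)
      have m1: "real m \<ge> 1" using elim(2) by simp
      have "norm (of_nat (Suc m) * vt a b c (Suc m)) = (real m + 1) * norm (vt a b c (Suc m))"
        by (simp add: norm_mult)
      also have "\<dots> \<le> (real m + 1) * (\<bar>C\<bar> * real m powr s)"
      proof -
        have "C * real m powr s \<le> \<bar>C\<bar> * real m powr s" by (rule mult_right_mono) auto
        thus ?thesis using elim(1) unfolding s_def by (intro mult_left_mono) auto
      qed
      also have "\<dots> \<le> (2 * real m) * (\<bar>C\<bar> * real m powr s)"
        using m1 by (intro mult_right_mono) auto
      also have "\<dots> = 2 * \<bar>C\<bar> * (real m powr s * real m powr 1)" using m1 by simp
      also have "\<dots> = 2 * \<bar>C\<bar> * real m powr (s + 1)" by (simp add: powr_add)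
      finally show ?case .
    qed
    show "(\<lambda>m. 2 * \<bar>C\<bar> * real m powr (s + 1)) \<longlonglongrightarrow> 0"
      using tendsto_mult_right_zero[OF tendsto_neg_powr[OF s filterlim_real_sequentially]] by simp
  qed
  thus ?thesis by (rule LIMSEQ_imp_Suc)
qed


lemma rat_lim:
  fixes p0 p1 p2 p3 K u1 u2 u3 :: complex
  assumes K: "K \<noteq> 0"
  shows "(\<lambda>n. (p0 + p1 * of_nat n + p2 * (of_nat n)^2 + p3 * (of_nat n)^3)
           / (K * (u1 + 2 * of_nat n) * (u2 + of_nat n) * (u3 + of_nat n))) \<longlonglongrightarrow> p3 / (K * 2)"
proof -
  define i where "i = (\<lambda>n::nat. inverse (of_nat n :: complex))"
  have i0: "i \<longlonglongrightarrow> 0" unfolding i_def by (rule lim_inverse_n)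
  have "(\<lambda>n. (p0 * i n ^ 3 + p1 * i n ^ 2 + p2 * i n + p3) / (K * (u1 * i n + 2) * (u2 * i n + 1) * (u3 * i n + 1)))
     \<longlonglongrightarrow> (p0 * 0 ^ 3 + p1 * 0 ^ 2 + p2 * 0 + p3) / (K * (u1 * 0 + 2) * (u2 * 0 + 1) * (u3 * 0 + 1))"
    by (intro tendsto_intros i0) (use K in simp)
  hence L: "(\<lambda>n. (p0 * i n ^ 3 + p1 * i n ^ 2 + p2 * i n + p3) / (K * (u1 * i n + 2) * (u2 * i n + 1) * (u3 * i n + 1)))
     \<longlonglongrightarrow> p3 / (K * 2)" by simp
  show ?thesis
  proof (rule Lim_transform_eventually[OF L])
    show "eventually (\<lambda>n. (p0 * i n ^ 3 + p1 * i n ^ 2 + p2 * i n + p3) / (K * (u1 * i n + 2) * (u2 * i n + 1) * (u3 * i n + 1))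
       = (p0 + p1 * of_nat n + p2 * (of_nat n)^2 + p3 * (of_nat n)^3)
           / (K * (u1 + 2 * of_nat n) * (u2 + of_nat n) * (u3 + of_nat n))) sequentially"
      using eventually_gt_at_top[of "0::nat"]
    proof eventually_elim
      case (elim n)
      define x :: complex where "x = of_nat n"
      have x: "x \<noteq> 0" using elim unfolding x_def by simp
      have ix: "i n = inverse x" unfolding i_def x_def ..
      have e1: "p0 * inverse x ^ 3 + p1 * inverse x ^ 2 + p2 * inverse x + p3 = (p0 + p1 * x + p2 * x^2 + p3 * x^3) / x^3"
        using x by (simp add: field_simps power2_eq_square power3_eq_cube)
      have e2: "K * (u1 * inverse x + 2) * (u2 * inverse x + 1) * (u3 * inverse x + 1) = (K * (u1 + 2 * x) * (u2 + x) * (u3 + x)) / x^3"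
        using x by (simp add: field_simps power3_eq_cube)
      show ?case unfolding ix e1 e2 x_def[symmetric] using x by simp
    qed
  qed
qed

lemma Pt_form: "\<exists>p0 p1 p2 p3. \<forall>x. Pt a b c x = p0 + p1 * x + p2 * x^2 + p3 * x^3"
  unfolding Pt_def by blast

lemma good_shift2:
  assumes "good a b c" shows "good (a + 2) b c"
  unfolding good_def
proof
  fix k :: nat
  from assms have H: "a + of_nat (Suc (Suc k)) \<noteq> 0 \<and> 1 + a - b + of_nat (Suc (Suc k)) \<noteq> 0 \<and> 1 + a - c + of_nat (Suc (Suc k)) \<noteq> 0"
    unfolding good_def by blast
  have e: "of_nat (Suc (Suc k)) = (of_nat k + 2 :: complex)" by simp
  show "a + 2 + of_nat k \<noteq> 0 \<and> 1 + (a + 2) - b + of_nat k \<noteq> 0 \<and> 1 + (a + 2) - c + of_nat k \<noteq> 0"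
    using H unfolding e by (simp add: algebra_simps)
qed

lemma re_nz: "Re z > 0 \<Longrightarrow> z \<noteq> 0" by auto

lemma GG_lim:
  assumes g: "good a b c" and re: "Re (1 + a - 2*b - 2*c) > 0"
  shows "GG a b c \<longlonglongrightarrow> 0"
proof -
  have D: "1 + a - 2*b - 2*c \<noteq> 0" using re_nz[OF re] .
  obtain p0 p1 p2 p3 where P: "\<And>x. Pt a b c x = p0 + p1 * x + p2 * x^2 + p3 * x^3" using Pt_form by blast
  have K: "(1 + a - 2*b - 2*c) * (a + 1) \<noteq> 0" using D goodD(5)[OF g] by simp
  have "(\<lambda>n. (p0 + p1 * of_nat n + p2 * (of_nat n)^2 + p3 * (of_nat n)^3)
           / ((1 + a - 2*b - 2*c) * (a + 1) * (a + 2 * of_nat n) * ((1 + a - b) + of_nat n) * ((1 + a - c) + of_nat n))) \<longlonglongrightarrow> p3 / ((1 + a - 2*b - 2*c) * (a + 1) * 2)"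
    by (rule rat_lim[OF K])
  hence L: "(\<lambda>n. Pt a b c (of_nat n) / ((1 + a - 2*b - 2*c) * (a + 1) * (a + 2 * of_nat n) * (1 + a - b + of_nat n) * (1 + a - c + of_nat n)))
     \<longlonglongrightarrow> p3 / ((1 + a - 2*b - 2*c) * (a + 1) * 2)" unfolding P by simp
  have "(\<lambda>n. (of_nat n * vt a b c n) * (Pt a b c (of_nat n) / ((1 + a - 2*b - 2*c) * (a + 1) * (a + 2 * of_nat n) * (1 + a - b + of_nat n) * (1 + a - c + of_nat n))))
     \<longlonglongrightarrow> 0 * (p3 / ((1 + a - 2*b - 2*c) * (a + 1) * 2))"
    by (intro tendsto_mult vt_n_lim[OF g re] L)
  thus ?thesis unfolding GG_def[abs_def] by (simp add: ac_simps)
qed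

lemma vt_contig:
  assumes g: "good a b c" and re: "Re (1 + a - 2*b - 2*c) > 0"
  shows "suminf (vt a b c) = rho a b c * suminf (vt (a + 2) b c)"
proof -
  have D: "1 + a - 2*b - 2*c \<noteq> 0" using re_nz[OF re] .
  have g2: "good (a + 2) b c" by (rule good_shift2[OF g])
  have re2: "Re (1 + (a + 2) - 2*b - 2*c) > 0" using re by simp
  have s1: "summable (vt a b c)" by (rule summable_norm_cancel[OF vt_summable[OF g re]])
  have s2: "summable (vt (a + 2) b c)" by (rule summable_norm_cancel[OF vt_summable[OF g2 re2]])
  have "(\<lambda>n. GG a b c (Suc n) - GG a b c n) sums (0 - GG a b c 0)"
    by (rule telescope_sums[OF GG_lim[OF g re]])
  hence "(\<lambda>n. vt a b c n - rho a b c * vt (a + 2) b c n) sums 0"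
    unfolding GG_diff[OF g D] by (simp add: GG_def)
  moreover have "(\<lambda>n. vt a b c n - rho a b c * vt (a + 2) b c n) sums (suminf (vt a b c) - rho a b c * suminf (vt (a + 2) b c))"
    by (intro sums_diff sums_mult summable_sums s1 s2)
  ultimately show ?thesis using sums_unique2 by fastforce
qed




lemma poch_nonneg0: "0 \<le> (x::real) \<Longrightarrow> 0 \<le> pochhammer x n"
  by (induction n) (auto simp: pochhammer_Suc)

lemma poch_norm_le:
  fixes z :: complex
  assumes r: "r \<ge> 0" and H: "\<And>k. k < n \<Longrightarrow> norm (z + of_nat k) \<le> r + of_nat k"
  shows "norm (pochhammer z n) \<le> pochhammer r n"
  using H
proof (induction n)
  case 0 show ?case by simp
next
  case (Suc n)
  have "norm (pochhammer z (Suc n)) = norm (pochhammer z n) * norm (z + of_nat n)"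
    by (simp add: pochhammer_Suc norm_mult)
  also have "\<dots> \<le> pochhammer r n * (r + of_nat n)"
    by (intro mult_mono Suc.IH Suc.prems) (use r in \<open>auto intro: poch_nonneg0\<close>)
  also have "\<dots> = pochhammer r (Suc n)" by (simp add: pochhammer_Suc)
  finally show ?case .
qed

lemma poch_norm_ge:
  fixes w :: complex
  assumes r: "r \<ge> 0" and H: "\<And>k. k < n \<Longrightarrow> r + of_nat k \<le> norm (w + of_nat k)"
  shows "pochhammer r n \<le> norm (pochhammer w n)"
  using H
proof (induction n)
  case 0 show ?case by simp
next
  case (Suc n)
  have "pochhammer r (Suc n) = pochhammer r n * (r + of_nat n)" by (simp add: pochhammer_Suc)
  also have "\<dots> \<le> norm (pochhammer w n) * norm (w + of_nat n)"
    by (intro mult_mono Suc.IH Suc.prems) (use r in \<open>auto intro: poch_nonneg0\<close>)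
  also have "\<dots> = norm (pochhammer w (Suc n))" by (simp add: pochhammer_Suc norm_mult)
  finally show ?case .
qed

lemma poch_real_mono: "0 \<le> r \<Longrightarrow> r \<le> s \<Longrightarrow> pochhammer r n \<le> pochhammer (s::real) n"
proof (induction n)
  case (Suc n)
  thus ?case unfolding pochhammer_Suc
    by (intro mult_mono) (auto intro: poch_nonneg0)
qed simp

lemma poch_ratio_bound:
  assumes w: "(w::real) \<ge> 1"
  shows "pochhammer (w + of_nat n) m \<le> (1 + of_nat n)^m * pochhammer w m"
proof (induction m)
  case (Suc m)
  have "(w + of_nat n + of_nat m) \<le> (1 + of_nat n) * (w + of_nat m)"
  proof -
    have "0 \<le> real n * (w + of_nat m - 1)" using w by simp
    thus ?thesis by (simp add: algebra_simps)
  qed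
  hence "pochhammer (w + of_nat n) m * (w + of_nat n + of_nat m) \<le> ((1 + of_nat n)^m * pochhammer w m) * ((1 + of_nat n) * (w + of_nat m))"
  proof (intro mult_mono Suc.IH)
    show "0 \<le> (1 + real n) ^ m * pochhammer w m" using w by (intro mult_nonneg_nonneg poch_nonneg0) auto
  qed (use w in \<open>auto intro: poch_nonneg0\<close>)
  thus ?case by (simp add: pochhammer_Suc algebra_simps)
qed simp

lemma poch_swap: "pochhammer r n * pochhammer (r + of_nat n) m = pochhammer r m * pochhammer (r + of_nat m) (n::nat)"
  using pochhammer_product'[of r n m] pochhammer_product'[of r m n] by (simp add: add.commute)

lemma poch_pow_ge: "(\<beta>::real) \<ge> 0 \<Longrightarrow> real n ^ m \<le> pochhammer (\<beta> + of_nat n) m"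
proof (induction m)
  case (Suc m)
  thus ?case unfolding pochhammer_Suc power_Suc
    by (subst mult.commute) (intro mult_mono, auto)
qed simp


lemma vt_master:
  fixes x b c :: complex and m1 m2 n :: nat
  assumes y1: "Re x \<ge> 1" and r1: "Re x + \<bar>Im x\<bar> - real m1 \<ge> 1"
    and hm1: "\<bar>Im x\<bar> + Re b - 1 \<le> real m1" and hm2: "norm c \<le> 1 + real m2"
    and r2: "1 + Re x - Re c \<ge> 1"
  shows "norm (vt x b c n) \<le> 2 * (1 + \<bar>Im x\<bar>) * (1 + real n)^(1 + m1 + m2)
           * (pochhammer (norm b) n / pochhammer (1 + Re x - Re c) n)"
proof -
  define y where "y = Re x"
  define d where "d = \<bar>Im x\<bar>"
  define R1 where "R1 = y + d - real m1"
  define R2 where "R2 = 1 + y - Re c"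
  have y1': "y \<ge> 1" and R1: "R1 \<ge> 1" and R2: "R2 \<ge> 1" and d0: "d \<ge> 0"
    using y1 r1 r2 unfolding y_def d_def R1_def R2_def by auto
  have e1: "norm (x + 2 * of_nat n) \<le> y + d + 2 * real n"
    using cmod_le[of "x + 2 * of_nat n"] y1 unfolding y_def d_def by simp
  have e2: "norm x \<ge> y" unfolding y_def using abs_Re_le_cmod[of x] by simp
  have e3: "norm (pochhammer x n) \<le> pochhammer (y + d) n"
  proof (rule poch_norm_le)
    fix k assume "k < n"
    show "norm (x + of_nat k) \<le> y + d + of_nat k"
      using cmod_le[of "x + of_nat k"] y1 unfolding y_def d_def by simp
  qed (use y1' d0 in auto)
  have e4: "norm (pochhammer b n) \<le> pochhammer (norm b) n"
  proof (rule poch_norm_le)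
    fix k assume "k < n"
    show "norm (b + of_nat k) \<le> norm b + of_nat k"
      using norm_triangle_ineq[of b "of_nat k"] by simp
  qed simp
  have e5: "norm (pochhammer c n) \<le> pochhammer (1 + real m2) n"
  proof (rule poch_norm_le)
    fix k assume "k < n"
    show "norm (c + of_nat k) \<le> 1 + real m2 + of_nat k"
      using norm_triangle_ineq[of c "of_nat k"] hm2 by simp
  qed simp
  have e6: "pochhammer R1 n \<le> norm (pochhammer (1 + x - b) n)"
  proof (rule poch_norm_ge)
    fix k assume "k < n"
    have "R1 + of_nat k \<le> Re (1 + x - b + of_nat k)" using hm1 unfolding R1_def y_def d_def by simp
    also have "\<dots> \<le> norm (1 + x - b + of_nat k)" by (rule complex_Re_le_cmod)
    finally show "R1 + of_nat k \<le> norm (1 + x - b + of_nat k)" .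
  qed (use R1 in auto)
  have e7: "pochhammer R2 n \<le> norm (pochhammer (1 + x - c) n)"
  proof (rule poch_norm_ge)
    fix k assume "k < n"
    have "R2 + of_nat k = Re (1 + x - c + of_nat k)" unfolding R2_def y_def by simp
    also have "\<dots> \<le> norm (1 + x - c + of_nat k)" by (rule complex_Re_le_cmod)
    finally show "R2 + of_nat k \<le> norm (1 + x - c + of_nat k)" .
  qed (use R2 in auto)
  have pR1: "pochhammer R1 n > 0" "pochhammer R1 m1 > 0" using R1 by (auto intro: pochhammer_pos)
  have pR2: "pochhammer R2 n > 0" using R2 by (auto intro: pochhammer_pos)
  have pf: "fact n > (0::real)" by simp
  have nv: "norm (vt x b c n) = norm (x + 2 * of_nat n) / norm x *
      (norm (pochhammer x n) * norm (pochhammer b n) * norm (pochhammer c n))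
      / (norm (pochhammer (1 + x - b) n) * norm (pochhammer (1 + x - c) n) * fact n)"
    unfolding vt_def by (simp add: norm_mult norm_divide)
  also have "\<dots> \<le> (y + d + 2 * real n) / y *
      (pochhammer (y + d) n * pochhammer (norm b) n * pochhammer (1 + real m2) n)
      / (pochhammer R1 n * pochhammer R2 n * fact n)"
  proof (rule frac_le)
    show "0 \<le> (y + d + 2 * real n) / y * (pochhammer (y + d) n * pochhammer (norm b) n * pochhammer (1 + real m2) n)"
      using y1' d0 by (intro mult_nonneg_nonneg divide_nonneg_nonneg poch_nonneg0) auto
    show "norm (x + 2 * of_nat n) / norm x * (norm (pochhammer x n) * norm (pochhammer b n) * norm (pochhammer c n))
      \<le> (y + d + 2 * real n) / y * (pochhammer (y + d) n * pochhammer (norm b) n * pochhammer (1 + real m2) n)"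
    proof (rule mult_mono)
      show "norm (x + 2 * of_nat n) / norm x \<le> (y + d + 2 * real n) / y"
        by (rule frac_le) (use e1 e2 y1' d0 in auto)
      show "norm (pochhammer x n) * norm (pochhammer b n) * norm (pochhammer c n)
          \<le> pochhammer (y + d) n * pochhammer (norm b) n * pochhammer (1 + real m2) n"
        by (intro mult_mono e3 e4 e5) (use y1' d0 in \<open>auto intro!: poch_nonneg0 mult_nonneg_nonneg\<close>)
    qed (use y1' d0 in auto)
    show "0 < pochhammer R1 n * pochhammer R2 n * fact n" using pR1 pR2 pf by simp
    show "pochhammer R1 n * pochhammer R2 n * fact n \<le> norm (pochhammer (1 + x - b) n) * norm (pochhammer (1 + x - c) n) * fact n"
      by (intro mult_mono e6 e7) (use pR1 pR2 in auto)
  qed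
  also have "\<dots> = ((y + d + 2 * real n) / y) * (pochhammer (y + d) n / pochhammer R1 n)
       * (pochhammer (1 + real m2) n / pochhammer 1 n) * (pochhammer (norm b) n / pochhammer R2 n)"
    using pR1 pR2 by (simp add: pochhammer_fact field_simps)
  also have "\<dots> \<le> (2 * (1 + d) * (1 + real n)) * ((1 + real n)^m1) * ((1 + real n)^m2) * (pochhammer (norm b) n / pochhammer R2 n)"
  proof (intro mult_mono)
    show "(y + d + 2 * real n) / y \<le> 2 * (1 + d) * (1 + real n)"
    proof -
      have "0 \<le> (y - 1) * (d + 2 * real n)" using y1' d0 by (intro mult_nonneg_nonneg) auto
      hence "y + d + 2 * real n \<le> y * (1 + d + 2 * real n)" by (simp add: algebra_simps)
      hence "(y + d + 2 * real n) / y \<le> 1 + d + 2 * real n" using y1' by (simp add: divide_le_eq mult.commute)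
      also have "\<dots> \<le> 2 * (1 + d) * (1 + real n)" using d0 by (simp add: algebra_simps)
      finally show ?thesis .
    qed
    show "pochhammer (y + d) n / pochhammer R1 n \<le> (1 + real n)^m1"
    proof -
      have "y + d = R1 + real m1" unfolding R1_def by simp
      hence "pochhammer (y + d) n * pochhammer R1 m1 = pochhammer R1 n * pochhammer (R1 + real n) m1"
        using poch_swap[of R1 m1 n] by (simp add: mult.commute)
      moreover have "pochhammer (R1 + real n) m1 \<le> (1 + real n)^m1 * pochhammer R1 m1"
        by (rule poch_ratio_bound[OF R1])
      ultimately have "pochhammer (y + d) n * pochhammer R1 m1 \<le> pochhammer R1 n * ((1 + real n)^m1 * pochhammer R1 m1)"
        using pR1 by (metis mult_left_mono less_imp_le)
      thus ?thesis using pR1 by (simp add: divide_le_eq algebra_simps)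
    qed
    show "pochhammer (1 + real m2) n / pochhammer 1 n \<le> (1 + real n)^m2"
    proof -
      have "pochhammer (1 + real m2) n * pochhammer 1 m2 = pochhammer 1 n * pochhammer (1 + real n) m2"
        using poch_swap[of 1 m2 n] by (simp add: mult.commute)
      moreover have "pochhammer (1 + real n) m2 \<le> (1 + real n)^m2 * pochhammer 1 m2"
        by (rule poch_ratio_bound) simp
      ultimately have "pochhammer (1 + real m2) n * pochhammer 1 m2 \<le> pochhammer 1 n * ((1 + real n)^m2 * pochhammer 1 m2)"
        by (metis mult_left_mono less_imp_le pochhammer_pos zero_less_one)
      moreover have "pochhammer (1::real) m2 > 0" "pochhammer (1::real) n > 0" by (auto intro: pochhammer_pos)
      ultimately show ?thesis by (simp add: divide_le_eq algebra_simps)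
    qed
  qed (use d0 pR2 y1' R1 R2 in \<open>auto intro!: divide_nonneg_nonneg mult_nonneg_nonneg poch_nonneg0\<close>)
  also have "\<dots> = 2 * (1 + d) * (1 + real n)^(1 + m1 + m2) * (pochhammer (norm b) n / pochhammer R2 n)"
    by (simp add: power_add)
  finally show ?thesis unfolding R2_def y_def d_def .
qed


lemma vt_zero: "x \<noteq> 0 \<Longrightarrow> vt x b c 0 = 1"
  unfolding vt_def by simp

lemma poch_ge_self: assumes "(r::real) \<ge> 1" "k \<ge> 1" shows "pochhammer r k \<ge> r"
proof -
  obtain j where k: "k = Suc j" using assms(2) by (cases k) auto
  have "pochhammer (r + 1) j \<ge> pochhammer 1 j" by (rule poch_real_mono) (use assms in auto)
  moreover have "pochhammer (1::real) j \<ge> 1" by (simp add: pochhammer_fact[symmetric])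
  ultimately have "pochhammer (r + 1) j \<ge> 1" by linarith
  hence "r * 1 \<le> r * pochhammer (r + 1) j" using assms(1) by (intro mult_left_mono) auto
  thus ?thesis unfolding k pochhammer_rec by simp
qed

lemma vt_tail_lim:
  assumes g: "good a b c"
  shows "(\<lambda>N. suminf (vt (a + 2 * of_nat N) b c)) \<longlonglongrightarrow> 1"
proof -
  define d where "d = \<bar>Im a\<bar>"
  define m1 where "m1 = nat \<lceil>d + Re b\<rceil>"
  define m2 where "m2 = nat \<lceil>norm c\<rceil>"
  define m3 where "m3 = m1 + m2 + 3"
  define \<beta> where "\<beta> = norm b"
  define R where "R = (\<lambda>N::nat. 1 + Re a + 2 * real N - Re c)"
  have hm1: "d + Re b - 1 \<le> real m1" unfolding m1_def by linarith
  have hm2: "norm c \<le> 1 + real m2" unfolding m2_def by linarith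
  have d0: "d \<ge> 0" and \<beta>0: "\<beta> \<ge> 0" unfolding d_def \<beta>_def by auto
  obtain N0 :: nat where N0: "max (max (1 - Re a) (1 - Re a - d + real m1)) (\<beta> + real m3 - 1 - Re a + Re c) < real N0"
    using reals_Archimedean2 by blast
  have cond: "Re (a + 2 * of_nat N) \<ge> 1 \<and> Re (a + 2 * of_nat N) + \<bar>Im (a + 2 * of_nat N)\<bar> - real m1 \<ge> 1
      \<and> \<bar>Im (a + 2 * of_nat N)\<bar> + Re b - 1 \<le> real m1 \<and> R N \<ge> \<beta> + real m3" if "N \<ge> N0" for N
  proof -
    have "real N \<ge> real N0" using that by simp
    thus ?thesis using N0 hm1 unfolding R_def d_def by auto
  qed
  have master: "norm (vt (a + 2 * of_nat N) b c k) \<le> 2 * (1 + d) * (1 + real k)^(1 + m1 + m2) * (pochhammer \<beta> k / pochhammer (R N) k)"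
    if "N \<ge> N0" for N k
  proof -
    have c: "Re (a + 2 * of_nat N) \<ge> 1" "Re (a + 2 * of_nat N) + \<bar>Im (a + 2 * of_nat N)\<bar> - real m1 \<ge> 1"
      "\<bar>Im (a + 2 * of_nat N)\<bar> + Re b - 1 \<le> real m1" "R N \<ge> \<beta> + real m3" using cond[OF that] by auto
    have "1 + Re (a + 2 * of_nat N) - Re c \<ge> 1" using c(4) \<beta>0 unfolding R_def m3_def by simp
    from vt_master[OF c(1) c(2) c(3) hm2 this, of k]
    show ?thesis unfolding R_def d_def \<beta>_def by (simp add: add.assoc)
  qed
  define K where "K = 2 * (1 + d) * pochhammer \<beta> m3 * 2^(1 + m1 + m2)"
  have bound: "norm (vt (a + 2 * of_nat N) b c k) \<le> K * inverse (real k ^ 2)" if "N \<ge> N0" "k \<ge> 1" for N k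
  proof -
    have RN: "R N \<ge> \<beta> + real m3" using cond[OF that(1)] by auto
    have pk: "pochhammer (\<beta> + real m3) k > 0" using \<beta>0 unfolding m3_def by (intro pochhammer_pos) auto
    have pk2: "pochhammer (\<beta> + real k) m3 > 0" using \<beta>0 that(2) by (intro pochhammer_pos) auto
    have k0: "real k > 0" using that(2) by simp
    have R0: "R N \<ge> 0" using RN \<beta>0 by simp
    have pRN: "pochhammer (R N) k > 0" using RN \<beta>0 unfolding m3_def by (intro pochhammer_pos) auto
    have "pochhammer \<beta> k / pochhammer (R N) k \<le> pochhammer \<beta> k / pochhammer (\<beta> + real m3) k"
      by (rule divide_left_mono) (use \<beta>0 pk RN pRN in \<open>auto intro: poch_real_mono poch_nonneg0\<close>)
    also have "\<dots> = pochhammer \<beta> m3 / pochhammer (\<beta> + real k) m3"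
      using poch_swap[of \<beta> k m3] pk pk2 by (simp add: field_simps)
    also have "\<dots> \<le> pochhammer \<beta> m3 / real k ^ m3"
      by (rule divide_left_mono) (use \<beta>0 k0 pk2 in \<open>auto intro: poch_pow_ge poch_nonneg0\<close>)
    finally have A: "pochhammer \<beta> k / pochhammer (R N) k \<le> pochhammer \<beta> m3 / real k ^ m3" .
    have B: "(1 + real k)^(1 + m1 + m2) \<le> (2 * real k)^(1 + m1 + m2)"
      using that(2) by (intro power_mono) auto
    have "norm (vt (a + 2 * of_nat N) b c k) \<le> 2 * (1 + d) * (1 + real k)^(1 + m1 + m2) * (pochhammer \<beta> k / pochhammer (R N) k)"
      by (rule master[OF that(1)])
    also have "\<dots> \<le> 2 * (1 + d) * (2 * real k)^(1 + m1 + m2) * (pochhammer \<beta> m3 / real k ^ m3)"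
      by (intro mult_mono A B) (use d0 \<beta>0 k0 pRN R0 in \<open>auto intro!: divide_nonneg_nonneg poch_nonneg0\<close>)
    also have "\<dots> = K * (real k ^ (1 + m1 + m2) / real k ^ m3)"
      unfolding K_def by (simp add: power_mult_distrib)
    also have "real k ^ (1 + m1 + m2) / real k ^ m3 = inverse (real k ^ 2)"
    proof -
      have "m3 = (1 + m1 + m2) + 2" unfolding m3_def by simp
      hence "real k ^ m3 = real k ^ (1 + m1 + m2) * real k ^ 2" by (simp only: power_add)
      thus ?thesis using k0 by (simp add: field_simps)
    qed
    finally show ?thesis .
  qed
  have lim: "(\<lambda>N. vt (a + 2 * of_nat N) b c k) \<longlonglongrightarrow> (if k = 0 then 1 else 0)" for k
  proof (cases "k = 0")
    case True
    have "eventually (\<lambda>N. vt (a + 2 * of_nat N) b c k = 1) sequentially"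
      using eventually_ge_at_top[of N0]
    proof eventually_elim
      case (elim N)
      have "Re (a + 2 * of_nat N) \<ge> 1" using cond[OF elim] by auto
      hence "a + 2 * of_nat N \<noteq> 0" by (intro re_nz) simp
      thus ?case using True by (simp add: vt_zero)
    qed
    thus ?thesis using True by (simp add: tendsto_eventually)
  next
    case False
    hence k1: "k \<ge> 1" by simp
    define Ck where "Ck = 2 * (1 + d) * (1 + real k)^(1 + m1 + m2) * pochhammer \<beta> k"
    have "filterlim (\<lambda>N. 2 * real N) at_top sequentially"
      by (rule filterlim_tendsto_pos_mult_at_top[OF tendsto_const]) (auto simp: filterlim_real_sequentially)
    from filterlim_tendsto_add_at_top[OF tendsto_const[of "1 + Re a - Re c"] this]
    have "filterlim (\<lambda>N. (1 + Re a - Re c) + 2 * real N) at_top sequentially" .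
    moreover have "(\<lambda>N. (1 + Re a - Re c) + 2 * real N) = R" by (auto simp: R_def fun_eq_iff)
    ultimately have "filterlim R at_top sequentially" by simp
    hence "(\<lambda>N. Ck / R N) \<longlonglongrightarrow> 0"
      by (intro tendsto_divide_0[OF tendsto_const] filterlim_at_top_imp_at_infinity)
    hence "(\<lambda>N. vt (a + 2 * of_nat N) b c k) \<longlonglongrightarrow> 0"
    proof (rule Lim_null_comparison[rotated])
      show "eventually (\<lambda>N. norm (vt (a + 2 * of_nat N) b c k) \<le> Ck / R N) sequentially"
        using eventually_ge_at_top[of N0]
      proof eventually_elim
        case (elim N)
        have RN: "R N \<ge> 1" using cond[OF elim] \<beta>0 unfolding m3_def by auto
        have pR: "pochhammer (R N) k \<ge> R N" by (rule poch_ge_self[OF RN k1])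
        have "pochhammer \<beta> k / pochhammer (R N) k \<le> pochhammer \<beta> k / R N"
          by (rule divide_left_mono) (use \<beta>0 RN pR in \<open>auto intro: poch_nonneg0\<close>)
        hence "2 * (1 + d) * (1 + real k)^(1 + m1 + m2) * (pochhammer \<beta> k / pochhammer (R N) k)
            \<le> 2 * (1 + d) * (1 + real k)^(1 + m1 + m2) * (pochhammer \<beta> k / R N)"
          by (rule mult_left_mono) (use d0 in auto)
        thus ?case using master[OF elim, of k] unfolding Ck_def by simp
      qed
    qed
    thus ?thesis using False by simp
  qed
  have T: "eventually (\<lambda>n. summable (\<lambda>k. norm (vt (a + 2 * of_nat n) b c k))) sequentially \<and>
           summable (\<lambda>n. norm (if n = 0 then 1 else 0 :: complex)) \<and>
           ((\<lambda>n. suminf (\<lambda>k. vt (a + 2 * of_nat n) b c k)) \<longlongrightarrow> suminf (\<lambda>k. if k = 0 then 1 else 0 :: complex)) sequentially"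
  proof (rule tannerys_theorem[where M = "\<lambda>k. K * inverse (real k ^ 2)"])
    show "\<And>k. (\<lambda>n. vt (a + 2 * of_nat n) b c k) \<longlonglongrightarrow> (if k = 0 then 1 else 0)" by (rule lim)
    show "eventually (\<lambda>(k, n). norm (vt (a + 2 * of_nat n) b c k) \<le> K * inverse (real k ^ 2)) (sequentially \<times>\<^sub>F sequentially)"
      unfolding eventually_prod_sequentially
      by (rule exI[of _ "max 1 N0"]) (auto intro!: bound)
    show "summable (\<lambda>k. K * inverse (real k ^ 2))"
      by (intro summable_mult inverse_power_summable) simp
  qed simp
  have "(\<lambda>k. if k = 0 then 1 else 0 :: complex) sums 1"
    using sums_single[of 0 "\<lambda>_. 1 :: complex"] by simp
  hence "suminf (\<lambda>k. if k = 0 then 1 else 0 :: complex) = 1" by (rule sums_unique[symmetric])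
  with T show ?thesis by simp
qed




lemma frac_pr:
  fixes r1 r2 r3 r4 F e1 e2 e3 e4 :: complex
  assumes "F \<noteq> 0" "e3 \<noteq> 0" "e4 \<noteq> 0"
  shows "(r1 * (F * e1)) * (r2 * (F * e2)) / ((r3 * (F * e3)) * (r4 * (F * e4)))
       = (r1 * r2 / (r3 * r4)) * (e1 * e2 / (e3 * e4))"
proof (cases "r3 * r4 = 0")
  case True thus ?thesis by auto
next
  case False thus ?thesis using assms by (simp add: field_simps)
qed

lemma poch_ratio_lim:
  fixes w1 w2 w3 w4 :: complex
  assumes s: "w1 + w2 = w3 + w4" and n3: "rGamma w3 \<noteq> 0" and n4: "rGamma w4 \<noteq> 0"
  shows "(\<lambda>M. pochhammer w1 M * pochhammer w2 M / (pochhammer w3 M * pochhammer w4 M))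
           \<longlonglongrightarrow> rGamma w1 * rGamma w2 / (rGamma w3 * rGamma w4)"
proof (rule LIMSEQ_imp_Suc)
  have "(\<lambda>m. rGamma_series w1 m * rGamma_series w2 m / (rGamma_series w3 m * rGamma_series w4 m))
           \<longlonglongrightarrow> rGamma w1 * rGamma w2 / (rGamma w3 * rGamma w4)"
    using n3 n4 by (intro tendsto_intros) auto
  moreover have "pochhammer w1 (Suc m) * pochhammer w2 (Suc m) / (pochhammer w3 (Suc m) * pochhammer w4 (Suc m))
     = rGamma_series w1 m * rGamma_series w2 m / (rGamma_series w3 m * rGamma_series w4 m)" for m
  proof -
    define L :: complex where "L = of_real (ln (of_nat m))"
    have "pochhammer w1 (Suc m) * pochhammer w2 (Suc m) / (pochhammer w3 (Suc m) * pochhammer w4 (Suc m))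
      = (rGamma_series w1 m * rGamma_series w2 m / (rGamma_series w3 m * rGamma_series w4 m))
        * (exp (w1 * L) * exp (w2 * L) / (exp (w3 * L) * exp (w4 * L)))"
      unfolding poch_rGS L_def[symmetric] by (rule frac_pr) auto
    also have "exp (w1 * L) * exp (w2 * L) / (exp (w3 * L) * exp (w4 * L)) = exp ((w1 + w2 - (w3 + w4)) * L)"
      by (simp add: exp_add[symmetric] exp_diff[symmetric] algebra_simps)
    also have "\<dots> = 1" using s by simp
    finally show ?thesis by simp
  qed
  ultimately show "(\<lambda>m. pochhammer w1 (Suc m) * pochhammer w2 (Suc m) / (pochhammer w3 (Suc m) * pochhammer w4 (Suc m)))
           \<longlonglongrightarrow> rGamma w1 * rGamma w2 / (rGamma w3 * rGamma w4)" by simp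
qed


lemma halves: "(p/2) * (q/2) / ((r/2) * (s/2)) = (p * q) / (r * (s::complex))"
  by (simp add: field_simps)

lemma frac_rho:
  fixes r t k1 k2 y1 y2 y3 y4 p q s :: complex
  assumes "r \<noteq> 0" "s \<noteq> 0" "y1 \<noteq> 0" "y2 \<noteq> 0" "y3 \<noteq> 0" "y4 \<noteq> 0"
  shows "(r * t) * (k1 * k2) / ((y1 * y2) * (y3 * y4)) * (p * q / (r * s)) = t * (k1 * k2 * p * q) / (y1 * y2 * y3 * y4 * s)"
  using assms by (simp add: field_simps)

lemma rho_step:
  fixes a b c x :: complex
  assumes n1: "1 + a + 2*x \<noteq> 0" and n6: "1 + a - 2*b - 2*c + 2*x \<noteq> 0"
    and n2: "1 + a - b + 2*x \<noteq> 0" "1 + a - b + 2*x + 1 \<noteq> 0" "1 + a - c + 2*x \<noteq> 0" "1 + a - c + 2*x + 1 \<noteq> 0"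
  shows "((1 + a + 2*x) * (1 + a + 2*x + 1)) * ((1 + a - b - c + 2*x) * (1 + a - b - c + 2*x + 1))
         / (((1 + a - b + 2*x) * (1 + a - b + 2*x + 1)) * ((1 + a - c + 2*x) * (1 + a - c + 2*x + 1)))
       * (((1 + a) / 2 - b + x) * ((1 + a) / 2 - c + x) / (((1 + a) / 2 + x) * ((1 + a) / 2 - b - c + x)))
       = rho (a + 2*x) b c"
proof -
  have e: "(1 + a) / 2 - b + x = (1 + a - 2*b + 2*x) / 2" "(1 + a) / 2 - c + x = (1 + a - 2*c + 2*x) / 2"
    "(1 + a) / 2 + x = (1 + a + 2*x) / 2" "(1 + a) / 2 - b - c + x = (1 + a - 2*b - 2*c + 2*x) / 2"
    by (simp_all add: field_simps)
  define u where "u = a + 2*x"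
  have u: "1 + a + 2*x = 1 + u" "1 + a + 2*x + 1 = 2 + u" "1 + a - b - c + 2*x = 1 + u - b - c"
    "1 + a - b - c + 2*x + 1 = 2 + u - b - c" "1 + a - b + 2*x = 1 + u - b" "1 + a - b + 2*x + 1 = 2 + u - b"
    "1 + a - c + 2*x = 1 + u - c" "1 + a - c + 2*x + 1 = 2 + u - c"
    "1 + a - 2*b + 2*x = 1 + u - 2*b" "1 + a - 2*c + 2*x = 1 + u - 2*c" "1 + a - 2*b - 2*c + 2*x = 1 + u - 2*b - 2*c"
    unfolding u_def by (simp_all add: algebra_simps)
  have n1': "1 + u \<noteq> 0" and n6': "1 + u - 2*b - 2*c \<noteq> 0" using n1 n6 u by auto
  have n2': "1 + u - b \<noteq> 0" "2 + u - b \<noteq> 0" "1 + u - c \<noteq> 0" "2 + u - c \<noteq> 0" using n2 u by auto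
  have "(1 + u) * (2 + u) * ((1 + u - b - c) * (2 + u - b - c)) / (((1 + u - b) * (2 + u - b)) * ((1 + u - c) * (2 + u - c)))
     * ((1 + u - 2*b) * (1 + u - 2*c) / ((1 + u) * (1 + u - 2*b - 2*c)))
     = (2 + u) * ((1 + u - b - c) * (2 + u - b - c) * (1 + u - 2*b) * (1 + u - 2*c)) / ((1 + u - b) * (2 + u - b) * (1 + u - c) * (2 + u - c) * (1 + u - 2*b - 2*c))"
    by (rule frac_rho) (use n1' n6' n2' in auto)
  also have "\<dots> = rho u b c" unfolding rho_def by (simp add: add.commute)
  finally have R: "(1 + u) * (2 + u) * ((1 + u - b - c) * (2 + u - b - c)) / (((1 + u - b) * (2 + u - b)) * ((1 + u - c) * (2 + u - c)))
     * ((1 + u - 2*b) * (1 + u - 2*c) / ((1 + u) * (1 + u - 2*b - 2*c))) = rho u b c" .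
  have v: "1 + u + 1 = 2 + u" "1 + u - b - c + 1 = 2 + u - b - c" "1 + u - b + 1 = 2 + u - b" "1 + u - c + 1 = 2 + u - c"
    by simp_all
  show ?thesis unfolding e halves unfolding u u_def[symmetric] v using R by (simp only: mult.assoc)
qed


lemma good_shiftN: "good a b c \<Longrightarrow> good (a + 2 * of_nat N) b c"
proof (induction N)
  case (Suc N)
  have "a + 2 * of_nat (Suc N) = (a + 2 * of_nat N) + 2" by (simp add: algebra_simps)
  show ?case unfolding \<open>a + 2 * of_nat (Suc N) = (a + 2 * of_nat N) + 2\<close>
    by (rule good_shift2) (rule Suc.IH[OF Suc.prems])
qed simp

lemma vt_iter:
  assumes g: "good a b c" and re: "Re (1 + a - 2*b - 2*c) > 0"
  shows "suminf (vt a b c) = (\<Prod>j<N. rho (a + 2 * of_nat j) b c) * suminf (vt (a + 2 * of_nat N) b c)"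
proof (induction N)
  case (Suc N)
  have re': "Re (1 + (a + 2 * of_nat N) - 2*b - 2*c) > 0" using re by simp
  have e: "a + 2 * of_nat (Suc N) = (a + 2 * of_nat N) + 2" by (simp add: algebra_simps)
  show ?case unfolding prod.lessThan_Suc Suc.IH e
    using vt_contig[OF good_shiftN[OF g] re'] by (simp add: mult.assoc)
qed simp

definition PA :: "complex \<Rightarrow> complex \<Rightarrow> complex \<Rightarrow> nat \<Rightarrow> complex" where
  "PA a b c M = pochhammer (1 + a) M * pochhammer (1 + a - b - c) M / (pochhammer (1 + a - b) M * pochhammer (1 + a - c) M)"

definition PB :: "complex \<Rightarrow> complex \<Rightarrow> complex \<Rightarrow> nat \<Rightarrow> complex" where
  "PB a b c N = pochhammer ((1 + a) / 2 - b) N * pochhammer ((1 + a) / 2 - c) N / (pochhammer ((1 + a) / 2) N * pochhammer ((1 + a) / 2 - b - c) N)"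

lemma poch2N: "pochhammer w (2 * Suc N) = pochhammer w (2 * N) * ((w + 2 * of_nat N) * (w + 2 * of_nat N + 1))"
proof -
  have "2 * Suc N = Suc (Suc (2 * N))" by simp
  thus ?thesis by (simp add: pochhammer_Suc algebra_simps)
qed

lemma frac_step:
  fixes p1 p2 p3 p4 q1 q2 q3 q4 X1 X2 Y1 Y2 U1 U2 V1 V2 :: complex
  assumes "p3 \<noteq> 0" "p4 \<noteq> 0" "q3 \<noteq> 0" "q4 \<noteq> 0" "Y1 \<noteq> 0" "Y2 \<noteq> 0" "V1 \<noteq> 0" "V2 \<noteq> 0"
  shows "(p1 * X1 * (p2 * X2)) / (p3 * Y1 * (p4 * Y2)) * ((q1 * U1) * (q2 * U2) / ((q3 * V1) * (q4 * V2)))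
    = (p1 * p2 / (p3 * p4)) * (q1 * q2 / (q3 * q4)) * (X1 * X2 / (Y1 * Y2) * (U1 * U2 / (V1 * V2)))"
  using assms by (simp add: field_simps)

lemma re_pos_npi: "Re w > 0 \<Longrightarrow> w + of_nat k \<noteq> 0"
  using re_nz[of "w + of_nat k"] by simp

lemma prod_rho:
  assumes g: "good a b c" and hz: "(1 + a) / 2 \<notin> \<int>\<^sub>\<le>\<^sub>0" and re: "Re (1 + a - 2*b - 2*c) > 0"
  shows "(\<Prod>j<N. rho (a + 2 * of_nat j) b c) = PA a b c (2 * N) * PB a b c N"
proof (induction N)
  case 0 show ?case by (simp add: PA_def PB_def)
next
  case (Suc N)
  define x :: complex where "x = of_nat N"
  define z where "z = (1 + a) / 2"
  have "Re (z - b - c) = Re (1 + a - 2*b - 2*c) / 2" unfolding z_def by (simp add: field_simps)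
  hence rez: "Re (z - b - c) > 0" using re by simp
  have hz': "\<And>k::nat. z + of_nat k \<noteq> 0" using hz unfolding npi_iff z_def by blast
  have hzbc: "\<And>k::nat. z - b - c + of_nat k \<noteq> 0" using re_pos_npi[OF rez] by blast
  have g1: "1 + a - b + of_nat (2*N) \<noteq> 0" "1 + a - b + of_nat (Suc (2*N)) \<noteq> 0"
      "1 + a - c + of_nat (2*N) \<noteq> 0" "1 + a - c + of_nat (Suc (2*N)) \<noteq> 0" using goodD[OF g] by blast+
  hence n2: "1 + a - b + 2*x \<noteq> 0" "1 + a - b + 2*x + 1 \<noteq> 0" "1 + a - c + 2*x \<noteq> 0" "1 + a - c + 2*x + 1 \<noteq> 0"
    unfolding x_def by (simp_all add: algebra_simps)
  hence nY: "(1 + a - b + 2 * x) * (1 + a - b + 2 * x + 1) \<noteq> 0" "(1 + a - c + 2 * x) * (1 + a - c + 2 * x + 1) \<noteq> 0"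
    by (simp_all only: mult_eq_0_iff de_Morgan_disj) blast+
  have nV: "z + x \<noteq> 0" "z - b - c + x \<noteq> 0" using hz'[of N] hzbc[of N] unfolding x_def by auto
  have n1: "1 + a + 2*x \<noteq> 0"
  proof
    assume "1 + a + 2*x = 0" hence "z + x = 0" unfolding z_def by (simp add: field_simps)
    with nV show False by simp
  qed
  have n6: "1 + a - 2*b - 2*c + 2*x \<noteq> 0"
  proof
    assume "1 + a - 2*b - 2*c + 2*x = 0" hence "z - b - c + x = 0" unfolding z_def by (simp add: field_simps)
    with nV show False by simp
  qed
  have nq: "pochhammer z N \<noteq> 0" "pochhammer (z - b - c) N \<noteq> 0" using hz' hzbc by (auto intro!: poch_nz)
  have "PA a b c (2 * Suc N) * PB a b c (Suc N)
    = (pochhammer (1 + a) (2 * N) * ((1 + a + 2 * x) * (1 + a + 2 * x + 1)) * (pochhammer (1 + a - b - c) (2 * N) * ((1 + a - b - c + 2 * x) * (1 + a - b - c + 2 * x + 1))))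
      / (pochhammer (1 + a - b) (2 * N) * ((1 + a - b + 2 * x) * (1 + a - b + 2 * x + 1)) * (pochhammer (1 + a - c) (2 * N) * ((1 + a - c + 2 * x) * (1 + a - c + 2 * x + 1))))
      * ((pochhammer (z - b) N * (z - b + x)) * (pochhammer (z - c) N * (z - c + x)) / ((pochhammer z N * (z + x)) * (pochhammer (z - b - c) N * (z - b - c + x))))"
    unfolding PA_def PB_def poch2N pochhammer_Suc x_def z_def ..
  also have "\<dots> = PA a b c (2 * N) * PB a b c N *
      (((1 + a + 2 * x) * (1 + a + 2 * x + 1)) * ((1 + a - b - c + 2 * x) * (1 + a - b - c + 2 * x + 1))
         / (((1 + a - b + 2 * x) * (1 + a - b + 2 * x + 1)) * ((1 + a - c + 2 * x) * (1 + a - c + 2 * x + 1)))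
       * ((z - b + x) * (z - c + x) / ((z + x) * (z - b - c + x))))"
    unfolding PA_def PB_def z_def[symmetric]
    by (rule frac_step) (use good_poch[OF g] nY nV nq in auto)
  also have "\<dots> = PA a b c (2 * N) * PB a b c N * rho (a + 2 * x) b c"
    unfolding z_def by (subst rho_step) (use n1 n6 n2 in auto)
  finally show ?case unfolding prod.lessThan_Suc Suc.IH x_def by simp
qed

definition RR :: "complex \<Rightarrow> complex \<Rightarrow> complex \<Rightarrow> complex" where
  "RR a b c = rGamma (1 + a) * rGamma (1 + a - b - c) / (rGamma (1 + a - b) * rGamma (1 + a - c))
     * (rGamma ((1 + a) / 2 - b) * rGamma ((1 + a) / 2 - c) / (rGamma ((1 + a) / 2) * rGamma ((1 + a) / 2 - b - c)))"

theorem vt_sums: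
  assumes g: "good a b c" and hz: "(1 + a) / 2 \<notin> \<int>\<^sub>\<le>\<^sub>0" and re: "Re (1 + a - 2*b - 2*c) > 0"
  shows "vt a b c sums RR a b c"
proof -
  define z where "z = (1 + a) / 2"
  have "Re (z - b - c) = Re (1 + a - 2*b - 2*c) / 2" unfolding z_def by (simp add: field_simps)
  hence rez: "Re (z - b - c) > 0" using re by simp
  have zbc: "z - b - c \<notin> \<int>\<^sub>\<le>\<^sub>0" unfolding npi_iff using re_pos_npi[OF rez] by blast
  have L1: "(\<lambda>N. PA a b c (2 * N)) \<longlonglongrightarrow> rGamma (1 + a) * rGamma (1 + a - b - c) / (rGamma (1 + a - b) * rGamma (1 + a - c))"
  proof -
    have "(\<lambda>M. PA a b c M) \<longlonglongrightarrow> rGamma (1 + a) * rGamma (1 + a - b - c) / (rGamma (1 + a - b) * rGamma (1 + a - c))"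
      unfolding PA_def by (rule poch_ratio_lim) (use good_npi[OF g] in \<open>auto simp: rGamma_eq_zero_iff\<close>)
    from LIMSEQ_subseq_LIMSEQ[OF this, of "\<lambda>N. 2 * N"] show ?thesis
      by (simp add: strict_mono_def o_def)
  qed
  have L2: "(\<lambda>N. PB a b c N) \<longlonglongrightarrow> rGamma (z - b) * rGamma (z - c) / (rGamma z * rGamma (z - b - c))"
    unfolding PB_def z_def[symmetric]
    by (rule poch_ratio_lim) (use hz zbc in \<open>auto simp: rGamma_eq_zero_iff z_def\<close>)
  have L3: "(\<lambda>N. suminf (vt (a + 2 * of_nat N) b c)) \<longlonglongrightarrow> 1" by (rule vt_tail_lim[OF g])
  have "(\<lambda>N. PA a b c (2 * N) * PB a b c N * suminf (vt (a + 2 * of_nat N) b c)) \<longlonglongrightarrow> RR a b c * 1"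
    unfolding RR_def z_def[symmetric] by (intro tendsto_mult L1 L2 L3)
  moreover have "(\<lambda>N. PA a b c (2 * N) * PB a b c N * suminf (vt (a + 2 * of_nat N) b c)) = (\<lambda>N. suminf (vt a b c))"
    using vt_iter[OF g re] prod_rho[OF g hz re] by auto
  ultimately have "suminf (vt a b c) = RR a b c" using LIMSEQ_unique[OF tendsto_const] by fastforce
  moreover have "summable (vt a b c)" by (rule summable_norm_cancel[OF vt_summable[OF g re]])
  ultimately show ?thesis using summable_sums by fastforce
qed




lemma poch_succ: "x \<noteq> 0 \<Longrightarrow> pochhammer (x + 1) n = pochhammer (x::complex) n * (x + of_nat n) / x"
  using pochhammer_rec[of x n] pochhammer_rec'[of x n] by (simp add: field_simps)

lemma frac_term:
  fixes A X B Y P C D E F x y p n2 :: complex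
  assumes "X \<noteq> 0" "Y \<noteq> 0" "P \<noteq> 0" "x \<noteq> 0" "y \<noteq> 0" "p \<noteq> 0" "F \<noteq> 0" "D \<noteq> 0" "E \<noteq> 0"
  shows "A * (X * (x + n2) / x * (B * (Y * (y + n2) / y * (P * (p + n2) / p * C)))) / (X * (D * (P * (Y * E))) * F)
    = (2 * x + 2 * n2) / (2 * x) * (A * B * C) / (D * E * F) * ((p + n2) * (y + n2) / (p * y))"
  using assms by (simp add: field_simps)

lemma term_id:
  fixes f a1 p d2 :: complex
  assumes hx: "(f - 1) / 2 \<notin> \<int>\<^sub>\<le>\<^sub>0" and hp: "p \<notin> \<int>\<^sub>\<le>\<^sub>0" and hy: "f - p - 1 \<notin> \<int>\<^sub>\<le>\<^sub>0"
    and hD: "f - a1 \<notin> \<int>\<^sub>\<le>\<^sub>0" and hE: "f - d2 \<notin> \<int>\<^sub>\<le>\<^sub>0"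
  shows "hyp_term [f - 1, (f + 1) / 2, a1, f - p, p + 1, d2] [(f - 1) / 2, f - a1, p, f - p - 1, f - d2] 1 n
    = vt (f - 1) a1 d2 n * ((p + of_nat n) * (f - p - 1 + of_nat n) / (p * (f - p - 1)))"
proof -
  define x where "x = (f - 1) / 2"
  define y where "y = f - p - 1"
  have x0: "x \<noteq> 0" and y0: "y \<noteq> 0" and p0: "p \<noteq> 0" using hx hy hp unfolding x_def y_def by auto
  have X: "pochhammer x n \<noteq> 0" and Y: "pochhammer y n \<noteq> 0" and P: "pochhammer p n \<noteq> 0"
    using hx hy hp unfolding x_def y_def npi_iff by (auto intro!: poch_nz)
  have DE: "pochhammer (f - a1) n \<noteq> 0" "pochhammer (f - d2) n \<noteq> 0"
    using hD hE unfolding npi_iff by (auto intro!: poch_nz)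
  have e1: "(f + 1) / 2 = x + 1" "f - p = y + 1" "f - 1 = 2 * x" unfolding x_def y_def by (simp_all add: field_simps)
  have e2: "1 + 2 * x - a1 = f - a1" "1 + 2 * x - d2 = f - d2" unfolding x_def by (simp_all add: field_simps)
  have "hyp_term [f - 1, (f + 1) / 2, a1, f - p, p + 1, d2] [(f - 1) / 2, f - a1, p, f - p - 1, f - d2] 1 n
    = pochhammer (2 * x) n * (pochhammer x n * (x + of_nat n) / x * (pochhammer a1 n * (pochhammer y n * (y + of_nat n) / y
        * (pochhammer p n * (p + of_nat n) / p * pochhammer d2 n))))
      / (pochhammer x n * (pochhammer (f - a1) n * (pochhammer p n * (pochhammer y n * pochhammer (f - d2) n))) * fact n)"
  proof -
    have e3: "2 * x / 2 = x" "y + 1 - 1 = y" by simp_all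
    have px: "pochhammer (x + 1) n = pochhammer x n * (x + of_nat n) / x" by (rule poch_succ[OF x0])
    have py: "pochhammer (y + 1) n = pochhammer y n * (y + of_nat n) / y" by (rule poch_succ[OF y0])
    have pp: "pochhammer (p + 1) n = pochhammer p n * (p + of_nat n) / p" by (rule poch_succ[OF p0])
    show ?thesis unfolding hyp_term_def list.map prod_list.Cons prod_list.Nil e1 x_def[symmetric] y_def[symmetric] px py pp
      by (simp only: mult_1_right power_one e3)
  qed
  also have "\<dots> = (2 * x + 2 * of_nat n) / (2 * x) * (pochhammer (2 * x) n * pochhammer a1 n * pochhammer d2 n)
      / (pochhammer (f - a1) n * pochhammer (f - d2) n * fact n) * ((p + of_nat n) * (y + of_nat n) / (p * y))"
    by (rule frac_term) (use X Y P x0 y0 p0 DE in auto)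
  also have "\<dots> = vt (f - 1) a1 d2 n * ((p + of_nat n) * (f - p - 1 + of_nat n) / (p * (f - p - 1)))"
  proof -
    have V: "vt (f - 1) a1 d2 n = (2 * x + 2 * of_nat n) / (2 * x) * (pochhammer (2 * x) n * pochhammer a1 n * pochhammer d2 n)
      / (pochhammer (f - a1) n * pochhammer (f - d2) n * fact n)"
      unfolding vt_def e1(3) e2 by (simp only: mult.assoc)
    show ?thesis unfolding V y_def ..
  qed
  finally show ?thesis .
qed


lemma frac_nshift:
  fixes M1 K T a A2 b c B C Pa2 Pb Pc Pb' Pc' F :: complex
  assumes "a \<noteq> 0" "A2 \<noteq> 0" "B \<noteq> 0" "C \<noteq> 0" "Pb' \<noteq> 0" "Pc' \<noteq> 0" "F \<noteq> 0" "M1 \<noteq> 0" "K \<noteq> 0"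
  shows "M1 * K * (T / a * (a * ((a + 1) * Pa2 / K) * (b * Pb) * (c * Pc))
          / (B * Pb' * (C * Pc') * (M1 * F)))
       = b * c * (a + 1) * A2 / (B * C) * (T / A2 * (Pa2 * Pb * Pc) / (Pb' * Pc' * F))"
  using assms by (simp add: field_simps)

lemma vt_nshift:
  assumes g: "good a b c"
  shows "of_nat (Suc m) * (a + of_nat (Suc m)) * vt a b c (Suc m)
    = b * c * (a + 1) * (a + 2) / ((1 + a - b) * (1 + a - c)) * vt (a + 2) (b + 1) (c + 1) m"
proof -
  define M :: complex where "M = of_nat m"
  have nz: "a + 1 + M \<noteq> 0" using goodD(1)[OF g, of "Suc m"] unfolding M_def by (simp add: algebra_simps)
  have pa: "pochhammer (a + 1) m = (a + 1) * pochhammer (a + 2) m / (a + 1 + M)"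
  proof -
    have "pochhammer (a + 1) m * (a + 1 + M) = (a + 1) * pochhammer (a + 1 + 1) m"
      using pochhammer_rec[of "a + 1" m] pochhammer_rec'[of "a + 1" m] unfolding M_def by (simp add: mult.commute)
    thus ?thesis using nz by (simp add: eq_divide_eq one_add_one add.assoc)
  qed
  have s1: "of_nat (Suc m) = M + 1" unfolding M_def by simp
  have M1: "M + 1 \<noteq> 0" unfolding M_def by simp
  have s3: "a + (M + 1) = a + 1 + M" "a + 2 * (M + 1) = a + 2 + 2 * M" by (simp_all add: algebra_simps)
  have s2: "1 + (a + 2) - (b + 1) = 1 + a - b + 1" "1 + (a + 2) - (c + 1) = 1 + a - c + 1" by simp_all
  have P: "pochhammer (1 + a - b + 1) m \<noteq> 0" "pochhammer (1 + a - c + 1) m \<noteq> 0"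
    using goodD(9,10)[OF g] by (auto intro!: poch_nz simp: algebra_simps)
  show ?thesis
    unfolding vt_def pochhammer_rec[of a] pochhammer_rec[of b] pochhammer_rec[of c]
      pochhammer_rec[of "1 + a - b"] pochhammer_rec[of "1 + a - c"] fact_Suc s1 s2 pa M_def[symmetric] s3
    by (rule frac_nshift) (use goodD[OF g] P nz M1 in auto)
qed


lemma RR_1: "RR (f - 1) a1 d2 = rGamma f * rGamma (f - a1 - d2) / (rGamma (f - a1) * rGamma (f - d2))
    * (rGamma (f/2 - a1) * rGamma (f/2 - d2) / (rGamma (f/2) * rGamma (f/2 - a1 - d2)))"
  unfolding RR_def by (simp add: algebra_simps)

lemma RR_2: "RR (f - 1 + 2) (a1 + 1) (d2 + 1) = rGamma (f + 2) * rGamma (f - a1 - d2) / (rGamma (f + 1 - a1) * rGamma (f + 1 - d2))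
    * (rGamma (f/2 - a1) * rGamma (f/2 - d2) / (rGamma (f/2 + 1) * rGamma (f/2 - a1 - d2 - 1)))"
proof -
  have e: "1 + (f - 1 + 2) = f + 2" "f + 2 - (a1 + 1) = f + 1 - a1" "f + 2 - (d2 + 1) = f + 1 - d2"
    "f + 1 - a1 - (d2 + 1) = f - a1 - d2" "(f + 2) / 2 = f/2 + 1" "f/2 + 1 - (a1 + 1) = f/2 - a1"
    "f/2 + 1 - (d2 + 1) = f/2 - d2" "f/2 - a1 - (d2 + 1) = f/2 - a1 - d2 - 1"
    by (simp_all add: field_simps)
  show ?thesis unfolding RR_def e ..
qed

lemma rG_shift: "w \<noteq> 0 \<Longrightarrow> v = w + 1 \<Longrightarrow> rGamma v = rGamma w / (w::complex)"
  using rGamma_plus1[of w] by (simp add: field_simps)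

lemma final_gen:
  fixes f f1 fa fd z a1 d2 h F1 Z1 Z2 g1 g2 g3 g4 g5 g6 g7 g8 :: complex
  assumes "g5 \<noteq> 0" "g6 \<noteq> 0" "g7 \<noteq> 0" "g8 \<noteq> 0" "f \<noteq> 0" "f1 \<noteq> 0" "fa \<noteq> 0" "fd \<noteq> 0"
    "a1 \<noteq> 0" "h \<noteq> 0" "Z1 \<noteq> 0" "F1 \<noteq> 0" "Z2 \<noteq> 0" "z \<noteq> 0" "d2 * z + h * Z2 \<noteq> 0"
  shows "g1 * (g4 / F1) / (g7 * g6) * ((g3 / Z1) * g2 / (g5 * (g8 / Z2)))
    + 1 / (a1 * h) * (a1 * d2 * f * f1 / (fa * fd) * ((g1 / (f * f1)) * (g4 / F1)
        / ((g7 / fa) * (g6 / fd)) * ((g3 / Z1) * g2 / ((g5 / z) * g8))))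
    = g1 * g2 * g3 * g4 / (g5 * g6 * g7 * g8) * (1 / (h * (- Z1) * (- F1) / (d2 * z + h * Z2)))"
  using assms by (simp add: field_simps)

lemma final_alg:
  fixes f a1 d2 h g1 g2 g3 g4 g5 g6 g7 g8 :: complex
  assumes "g5 \<noteq> 0" "g6 \<noteq> 0" "g7 \<noteq> 0" "g8 \<noteq> 0" "f \<noteq> 0" "f + 1 \<noteq> 0" "f - a1 \<noteq> 0" "f - d2 \<noteq> 0"
    "a1 \<noteq> 0" "h \<noteq> 0" "f/2 - a1 - 1 \<noteq> 0" "f - a1 - d2 - 1 \<noteq> 0" "f/2 - a1 - d2 - 1 \<noteq> 0"
    "d2 * f / 2 - h * (1 + d2 + a1 - f / 2) \<noteq> 0"
  shows "g1 * (g4 / (f - a1 - d2 - 1)) / (g7 * g6) * ((g3 / (f/2 - a1 - 1)) * g2 / (g5 * (g8 / (f/2 - a1 - d2 - 1))))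
    + 1 / (a1 * h) * (a1 * d2 * f * (f + 1) / ((f - a1) * (f - d2)) * ((g1 / (f * (f + 1))) * (g4 / (f - a1 - d2 - 1))
        / ((g7 / (f - a1)) * (g6 / (f - d2))) * ((g3 / (f/2 - a1 - 1)) * g2 / ((g5 / (f/2)) * g8))))
    = g1 * g2 * g3 * g4 / (g5 * g6 * g7 * g8) * (1 / (h * (1 + a1 - f / 2) * (1 + d2 + a1 - f) / (d2 * f / 2 - h * (1 + d2 + a1 - f / 2))))"
proof -
  have r: "1 + a1 - f / 2 = - (f/2 - a1 - 1)" "1 + d2 + a1 - f = - (f - a1 - d2 - 1)"
    "d2 * f / 2 - h * (1 + d2 + a1 - f / 2) = d2 * (f/2) + h * (f/2 - a1 - d2 - 1)"
    by (simp_all add: algebra_simps)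
  have z: "f / 2 \<noteq> 0" using assms(5) by simp
  show ?thesis unfolding r
    by (rule final_gen) (use assms z r(3) in auto)
qed


lemma good_from:
  fixes f a1 d2 :: complex
  assumes hb1: "(f - 1) / 2 \<notin> \<int>\<^sub>\<le>\<^sub>0" and hf2: "f / 2 \<notin> \<int>\<^sub>\<le>\<^sub>0"
    and hb2: "f - a1 \<notin> \<int>\<^sub>\<le>\<^sub>0" and hb5: "f - d2 \<notin> \<int>\<^sub>\<le>\<^sub>0"
  shows "good (f - 1) a1 d2"
  unfolding good_def
proof (intro allI conjI)
  fix k :: nat
  show "f - 1 + of_nat k \<noteq> 0"
  proof
    assume H: "f - 1 + of_nat k = 0"
    show False
    proof (cases "even k")
      case True
      then obtain j where k: "k = 2 * j" by (auto elim: evenE)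
      have "(f - 1) / 2 + of_nat j = (f - 1 + of_nat k) / 2" unfolding k by (simp add: field_simps)
      also have "\<dots> = 0" using H by simp
      finally show False using hb1 unfolding npi_iff by blast
    next
      case False
      then obtain j where k: "k = 2 * j + 1" by (auto elim: oddE)
      have "f / 2 + of_nat j = (f - 1 + of_nat k) / 2" unfolding k by (simp add: field_simps)
      also have "\<dots> = 0" using H by simp
      finally show False using hf2 unfolding npi_iff by blast
    qed
  qed
  show "1 + (f - 1) - a1 + of_nat k \<noteq> 0" using hb2 unfolding npi_iff by simp
  show "1 + (f - 1) - d2 + of_nat k \<noteq> 0" using hb5 unfolding npi_iff by simp
qed

lemma good_next: "good a b c \<Longrightarrow> good (a + 2) (b + 1) (c + 1)"
  unfolding good_def
proof (intro allI conjI)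
  fix k :: nat assume H: "\<forall>k::nat. a + of_nat k \<noteq> 0 \<and> 1 + a - b + of_nat k \<noteq> 0 \<and> 1 + a - c + of_nat k \<noteq> 0"
  have e: "of_nat (Suc (Suc k)) = (of_nat k + 2 :: complex)" "of_nat (Suc k) = (of_nat k + 1 :: complex)" by simp_all
  show "a + 2 + of_nat k \<noteq> 0" using H[rule_format, of "Suc (Suc k)"] unfolding e by (simp add: algebra_simps)
  show "1 + (a + 2) - (b + 1) + of_nat k \<noteq> 0" using H[rule_format, of "Suc k"] unfolding e by (simp add: algebra_simps)
  show "1 + (a + 2) - (c + 1) + of_nat k \<noteq> 0" using H[rule_format, of "Suc k"] unfolding e by (simp add: algebra_simps)
qed

lemma inv_gen: "inverse A * inverse B * inverse C * inverse D / (inverse E * inverse F * inverse G * inverse H)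
   = E * F * G * H / (A * B * C * (D::complex))"
  by (simp add: divide_inverse inverse_mult_distrib mult_ac)

theorem mainTheorem6:
  fixes f a1 p d2 h k :: complex
  assumes hRe: "Re (f - 2*a1 - 2*d2 - 2) > 0"
    and hb1: "(f - 1) / 2 \<notin> \<int>\<^sub>\<le>\<^sub>0"
    and hb2: "f - a1 \<notin> \<int>\<^sub>\<le>\<^sub>0"
    and hb3: "p \<notin> \<int>\<^sub>\<le>\<^sub>0"
    and hb4: "f - p - 1 \<notin> \<int>\<^sub>\<le>\<^sub>0"
    and hb5: "f - d2 \<notin> \<int>\<^sub>\<le>\<^sub>0"
    and ha1: "a1 \<noteq> 0"
    and hf2: "f / 2 \<notin> \<int>\<^sub>\<le>\<^sub>0"
    and hden: "d2 * f / 2 - h * (1 + d2 + a1 - f / 2) \<noteq> 0"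
    and hh: "h = p * (f - p - 1) / a1"
    and hk: "k = h * (1 + a1 - f / 2) * (1 + d2 + a1 - f) / (d2 * f / 2 - h * (1 + d2 + a1 - f / 2))"
    and hknp: "k \<notin> \<int>\<^sub>\<le>\<^sub>0"
  shows "(hyp_term [f - 1, (f + 1) / 2, a1, f - p, p + 1, d2]
                   [(f - 1) / 2, f - a1, p, f - p - 1, f - d2] 1) sums
           (Gamma (f/2) * Gamma (f - d2) * Gamma (f - a1) * Gamma (f/2 - a1 - d2 - 1)
            / (Gamma f * Gamma (f/2 - d2) * Gamma (f/2 - a1 - 1) * Gamma (f - a1 - d2 - 1))
            * (Gamma k / Gamma (k + 1)))"
proof -
  have g: "good (f - 1) a1 d2" by (rule good_from[OF hb1 hf2 hb2 hb5])
  have g2: "good (f - 1 + 2) (a1 + 1) (d2 + 1)" by (rule good_next[OF g])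
  have e1: "(1 + (f - 1)) / 2 = f / 2" "(1 + (f - 1 + 2)) / 2 = f / 2 + 1" by (simp_all add: field_simps)
  have hz: "(1 + (f - 1)) / 2 \<notin> \<int>\<^sub>\<le>\<^sub>0" unfolding e1 by (rule hf2)
  have hz2: "(1 + (f - 1 + 2)) / 2 \<notin> \<int>\<^sub>\<le>\<^sub>0" unfolding e1 using hf2 unfolding npi_iff
    by (metis add.assoc of_nat_Suc add.commute)
  have re: "Re (1 + (f - 1) - 2*a1 - 2*d2) > 0" using hRe by simp
  have re2: "Re (1 + (f - 1 + 2) - 2*(a1 + 1) - 2*(d2 + 1)) > 0" using hRe by simp
  have S1: "vt (f - 1) a1 d2 sums RR (f - 1) a1 d2" by (rule vt_sums[OF g hz re])
  have S2: "vt (f - 1 + 2) (a1 + 1) (d2 + 1) sums RR (f - 1 + 2) (a1 + 1) (d2 + 1)" by (rule vt_sums[OF g2 hz2 re2])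
  define K where "K = a1 * d2 * (f - 1 + 1) * (f - 1 + 2) / ((1 + (f - 1) - a1) * (1 + (f - 1) - d2))"
  define Fn where "Fn = (\<lambda>n. of_nat n * ((f - 1) + of_nat n) * vt (f - 1) a1 d2 n)"
  have "(\<lambda>m. Fn (Suc m)) sums (K * RR (f - 1 + 2) (a1 + 1) (d2 + 1))"
    unfolding Fn_def vt_nshift[OF g] K_def[symmetric] by (rule sums_mult[OF S2])
  hence S3: "Fn sums (K * RR (f - 1 + 2) (a1 + 1) (d2 + 1))" unfolding sums_Suc_iff by (simp add: Fn_def)
  have p0: "p \<noteq> 0" and y0: "f - p - 1 \<noteq> 0" using hb3 hb4 by auto
  have P: "p * (f - p - 1) = a1 * h" using hh ha1 by simp
  have T: "hyp_term [f - 1, (f + 1) / 2, a1, f - p, p + 1, d2] [(f - 1) / 2, f - a1, p, f - p - 1, f - d2] 1 n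
      = vt (f - 1) a1 d2 n + 1 / (a1 * h) * Fn n" for n
  proof -
    have "(p + of_nat n) * (f - p - 1 + of_nat n) = p * (f - p - 1) + of_nat n * ((f - 1) + of_nat n)"
      by (simp add: algebra_simps)
    hence "(p + of_nat n) * (f - p - 1 + of_nat n) / (p * (f - p - 1)) = (a1 * h + of_nat n * ((f - 1) + of_nat n)) / (a1 * h)"
      unfolding P by simp
    also have "\<dots> = 1 + of_nat n * ((f - 1) + of_nat n) / (a1 * h)"
    proof -
      have AH: "a1 * h \<noteq> 0" by (metis P mult_eq_0_iff p0 y0)
      thus ?thesis by (simp add: add_divide_distrib)
    qed
    finally have Req: "(p + of_nat n) * (f - p - 1 + of_nat n) / (p * (f - p - 1)) = 1 + of_nat n * ((f - 1) + of_nat n) / (a1 * h)" .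
    show ?thesis unfolding term_id[OF hb1 hb3 hb4 hb2 hb5] Fn_def Req by (simp add: ring_distribs mult_ac add_divide_distrib diff_divide_distrib)
  qed
  have S: "(hyp_term [f - 1, (f + 1) / 2, a1, f - p, p + 1, d2] [(f - 1) / 2, f - a1, p, f - p - 1, f - d2] 1)
     sums (RR (f - 1) a1 d2 + 1 / (a1 * h) * (K * RR (f - 1 + 2) (a1 + 1) (d2 + 1)))"
    unfolding T by (intro sums_add S1 sums_mult S3)
  have k0: "k \<noteq> 0" using hknp by auto
  have h0: "h \<noteq> 0" and Z1: "f/2 - a1 - 1 \<noteq> 0" and F1: "f - a1 - d2 - 1 \<noteq> 0"
  proof -
    have "h * (1 + a1 - f / 2) * (1 + d2 + a1 - f) \<noteq> 0" using k0 hk by auto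
    hence A: "h \<noteq> 0" "1 + a1 - f / 2 \<noteq> 0" "1 + d2 + a1 - f \<noteq> 0" by auto
    have e: "f/2 - a1 - 1 = - (1 + a1 - f / 2)" "f - a1 - d2 - 1 = - (1 + d2 + a1 - f)" by simp_all
    show "h \<noteq> 0" by (rule A(1))
    show "f/2 - a1 - 1 \<noteq> 0" unfolding e(1) neg_equal_0_iff_equal by (rule A(2))
    show "f - a1 - d2 - 1 \<noteq> 0" unfolding e(2) neg_equal_0_iff_equal by (rule A(3))
  qed
  have "Re (f/2 - a1 - d2 - 1) = Re (f - 2*a1 - 2*d2 - 2) / 2" by (simp add: field_simps)
  hence reZ2: "Re (f/2 - a1 - d2 - 1) > 0" using hRe by simp
  hence Z2: "f/2 - a1 - d2 - 1 \<noteq> 0" by (rule re_nz)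
  have Z2n: "f/2 - a1 - d2 - 1 \<notin> \<int>\<^sub>\<le>\<^sub>0" unfolding npi_iff using re_pos_npi[OF reZ2] by blast
  have f0: "f \<noteq> 0" and fh: "f / 2 \<noteq> 0" using hf2 by auto
  have f1: "f + 1 \<noteq> 0"
  proof
    assume "f + 1 = 0" hence "f = - 1" by (simp add: eq_neg_iff_add_eq_0)
    hence "(f - 1) / 2 = - of_nat 1" by simp
    with hb1 show False by (metis minus_of_nat_in_nonpos_Ints)
  qed
  have fa: "f - a1 \<noteq> 0" and fd: "f - d2 \<noteq> 0" using hb2 hb5 by auto
  have E1: "rGamma (f/2 - a1) = rGamma (f/2 - a1 - 1) / (f/2 - a1 - 1)" by (rule rG_shift[OF Z1]) simp
  have E2: "rGamma (f - a1 - d2) = rGamma (f - a1 - d2 - 1) / (f - a1 - d2 - 1)" by (rule rG_shift[OF F1]) simp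
  have E3: "rGamma (f/2 - a1 - d2) = rGamma (f/2 - a1 - d2 - 1) / (f/2 - a1 - d2 - 1)" by (rule rG_shift[OF Z2]) simp
  have E4: "rGamma (f + 2) = rGamma f / (f * (f + 1))"
  proof -
    have "rGamma (f + 2) = rGamma (f + 1) / (f + 1)" by (rule rG_shift[OF f1]) simp
    also have "rGamma (f + 1) = rGamma f / f" by (rule rG_shift[OF f0]) simp
    finally show ?thesis by (simp add: field_simps)
  qed
  have E5: "rGamma (f + 1 - a1) = rGamma (f - a1) / (f - a1)" by (rule rG_shift[OF fa]) simp
  have E6: "rGamma (f + 1 - d2) = rGamma (f - d2) / (f - d2)" by (rule rG_shift[OF fd]) simp
  have E7: "rGamma (f/2 + 1) = rGamma (f/2) / (f/2)" by (rule rG_shift[OF fh]) simp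
  have Kv: "K = a1 * d2 * f * (f + 1) / ((f - a1) * (f - d2))" unfolding K_def by simp
  have GG: "Gamma (f/2) * Gamma (f - d2) * Gamma (f - a1) * Gamma (f/2 - a1 - d2 - 1)
            / (Gamma f * Gamma (f/2 - d2) * Gamma (f/2 - a1 - 1) * Gamma (f - a1 - d2 - 1))
      = rGamma f * rGamma (f/2 - d2) * rGamma (f/2 - a1 - 1) * rGamma (f - a1 - d2 - 1)
         / (rGamma (f/2) * rGamma (f - d2) * rGamma (f - a1) * rGamma (f/2 - a1 - d2 - 1))"
    unfolding Gamma_def by (rule inv_gen)
  have Gk: "Gamma k / Gamma (k + 1) = 1 / k"
    using Gamma_plus1[OF hknp] Gamma_nonzero[OF hknp] k0 by (simp add: field_simps)
  have nz: "rGamma (f/2) \<noteq> 0" "rGamma (f - d2) \<noteq> 0" "rGamma (f - a1) \<noteq> 0" "rGamma (f/2 - a1 - d2 - 1) \<noteq> 0"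
    using hf2 hb5 hb2 Z2n by (auto simp: rGamma_eq_zero_iff)
  have V: "RR (f - 1) a1 d2 + 1 / (a1 * h) * (K * RR (f - 1 + 2) (a1 + 1) (d2 + 1))
     = Gamma (f/2) * Gamma (f - d2) * Gamma (f - a1) * Gamma (f/2 - a1 - d2 - 1)
            / (Gamma f * Gamma (f/2 - d2) * Gamma (f/2 - a1 - 1) * Gamma (f - a1 - d2 - 1))
            * (Gamma k / Gamma (k + 1))"
    unfolding RR_1 RR_2 E1 E2 E3 E4 E5 E6 E7 Kv GG Gk unfolding hk
    by (rule final_alg) (use nz f0 f1 fa fd ha1 h0 Z1 F1 Z2 hden in auto)
  show ?thesis using S unfolding V .
qed


end
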